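(* In a $2^K$ factorial experiment, for nonempty $\mathcal F_+\subseteq\mathcal P_K$ and any $\mathcal F_+'\subseteq\mathcal P_K'$, the OLS outputs of the regression $Y_i\sim1+\sum_{\mathcal K\in\mathcal F_+}Z_{i,\mathcal K}+\sum_{\mathcal K\in\mathcal F_+'}Z_{i,\mathcal K}x_i$ satisfy $\tilde\tau_{r,+}=C_{S,+}\hat Y_{r,S}$ and $\tilde\Omega_{r,+}=C_{S,+}\hat\Psi_{r,S}C_{S,+}^T$.
   Context: $2^K$ factorial experiment: $Q=2^K$ treatment levels $(z_1,\dots,z_K)\in\{-1,+1\}^K$ identified with $1,\dots,Q$ lexicographically ($-1$ before $+1$). $N$ units with outcomes $Y_i$, covariates $x_i\in\mathbb R^J$ ($\sum_ix_i=0$), treatment indicator vector $t_i\in\{0,1\}^Q$, and factor levels $Z_{ik}\in\{-1,+1\}$. $\mathcal P_K$: nonempty subsets of $\{1,\dots,K\}$; $\mathcal P_K'=\{\emptyset\}\cup\mathcal P_K$; $Z_{i,\mathcal K}=\prod_{k\in\mathcal K}Z_{ik}$ with $Z_{i,\emptyset}=1$ (so $Z_{i,\emptyset}x_i=x_i$). $c_{\mathcal K}\in\mathbb R^Q$ has entry $2^{-(K-1)}\prod_{k\in\mathcal K}z_k$ at level $(z_1,\dots,z_K)$ (so $c_\emptyset=2^{-(K-1)}1_Q$). $C_{S,+}$ has rows $c_{\mathcal K}^T$, $\mathcal K\in\mathcal F_+$; $C_{S,-}$ has rows $c_{\mathcal K}^T$, $\mathcal K\in\mathcal P_K\setminus\mathcal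 F_+$ (the zero row $0^T$ if empty); $C'_{S,-}$ has rows $c_{\mathcal K}^T$, $\mathcal K\in\mathcal P_K'\setminus\mathcal F_+'$ (zero row if empty). OLS outputs: $\tilde\tau_{r,+}$ is the vector of 2 times the OLS coefficients of $Z_{i,\mathcal K}$, $\mathcal K\in\mathcal F_+$ (ordered as rows of $C_{S,+}$), and $\tilde\Omega_{r,+}$ its Eicker–Huber–White covariance estimator (4 times the corresponding block of $(X^TX)^{-1}X^T\mathrm{diag}(\hat\epsilon_i^2)X(X^TX)^{-1}$, $X$ design matrix, $\hat\epsilon_i$ residuals). Restricted least squares: $\chi_{L,i}=(t_i^T,(t_i\otimes x_i)^T)^T$, $\chi_L$ the matrix with rows $\chi_{L,i}^T$ ($\chi_L^T\chi_L$ nonsingular), $\theta=(\theta_Y^T,\theta_\gamma^T)^T$, $\theta_Y\in\mathbb R^Q$, $\theta_\gamma\in\mathbb R^{JQ}$. With restriction $R\theta=0$ given by $C_{S,-}\theta_Y=0$ and $(C'_{S,-}\otimes I_J)\theta_\gamma=0$ (dropping vacuous zero rows), $\hat\theta_r=\arg\min_\theta\sum_i(Y_i-\chi_{L,i}^T\theta)^2$ s.t. $R\theta=0$, and $\hat Y_{r,S}$ is its $\theta_Y$-part. With RLS residuals $\hat\epsilon_{r,i}$, $M_r=(\chi_L^T\chi_L)^{-1}R^T\{R(\chi_L^T\chi_L)^{-1}R^T\}^{-1}$ and $\hat\Sigma_r=(\chi_L^T\chi_L)^{-1}\chi_L^T\mathrm{diag}(\hat\epsilon_{r,i}^2)\chi_L(\chi_L^T\chi_L)^{-1}$,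 $\hat\Psi_{r,S}$ is the upper-left $Q\times Q$ block of $(I-M_rR)\hat\Sigma_r(I-M_rR)^T$. *)

theory Defs
  imports "Jordan_Normal_Form.Gauss_Jordan_Elimination"
begin

definition minv :: "real mat \<Rightarrow> real mat" where
  "minv A = the (mat_inverse A)"

definition vkron :: "real vec \<Rightarrow> real vec \<Rightarrow> real vec" where
  "vkron a b = vec (dim_vec a * dim_vec b)
     (\<lambda>c. a $ (c div dim_vec b) * b $ (c mod dim_vec b))"

definition mkron :: "real mat \<Rightarrow> real mat \<Rightarrow> real mat" where
  "mkron A B = mat (dim_row A * dim_row B) (dim_col A * dim_col B)
     (\<lambda>(i,j). A $$ (i div dim_row B, j div dim_col B) * B $$ (i mod dim_row B, j mod dim_col B))"

definition ols_coef :: "real mat \<Rightarrow> real vec \<Rightarrow> real vec" where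
  "ols_coef X Y = minv (transpose_mat X * X) *\<^sub>v (transpose_mat X *\<^sub>v Y)"

definition ols_resid :: "real mat \<Rightarrow> real vec \<Rightarrow> real vec" where
  "ols_resid X Y = Y - X *\<^sub>v ols_coef X Y"

definition sandwich :: "real mat \<Rightarrow> real vec \<Rightarrow> real mat" where
  "sandwich X e = minv (transpose_mat X * X) * transpose_mat X
      * mat_diag (dim_row X) (\<lambda>i. (e $ i)^2) * X * minv (transpose_mat X * X)"

definition ehw_cov :: "real mat \<Rightarrow> real vec \<Rightarrow> real mat" where
  "ehw_cov X Y = sandwich X (ols_resid X Y)"

definition ssr :: "real mat \<Rightarrow> real vec \<Rightarrow> real vec \<Rightarrow> real" where
  "ssr A Y \<theta> = (Y - A *\<^sub>v \<theta>) \<bullet> (Y - A *\<^sub>v \<theta>)"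

definition rls_coef :: "real mat \<Rightarrow> real mat \<Rightarrow> real vec \<Rightarrow> real vec" where
  "rls_coef A R Y = (THE \<theta>. \<theta> \<in> carrier_vec (dim_col A) \<and> R *\<^sub>v \<theta> = 0\<^sub>v (dim_row R) \<and>
      (\<forall>\<theta>'\<in>carrier_vec (dim_col A). R *\<^sub>v \<theta>' = 0\<^sub>v (dim_row R) \<longrightarrow> ssr A Y \<theta> \<le> ssr A Y \<theta>'))"

definition rls_resid :: "real mat \<Rightarrow> real mat \<Rightarrow> real vec \<Rightarrow> real vec" where
  "rls_resid A R Y = Y - A *\<^sub>v rls_coef A R Y"

definition rls_M :: "real mat \<Rightarrow> real mat \<Rightarrow> real mat" where
  "rls_M A R = minv (transpose_mat A * A) * transpose_mat R
      * minv (R * minv (transpose_mat A * A) * transpose_mat R)"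

definition rls_cov :: "real mat \<Rightarrow> real mat \<Rightarrow> real vec \<Rightarrow> real mat" where
  "rls_cov A R Y = (let P = 1\<^sub>m (dim_col A) - rls_M A R * R
      in P * sandwich A (rls_resid A R Y) * transpose_mat P)"

text \<open>Factors are indexed 0..K-1 (factor k+1 of the paper is k here); treatment levels are
  indexed 0..2^K-1 (level q+1 of the paper is q here).  Lexicographic order with -1 before +1
  means level q corresponds to the binary expansion of q, factor 0 being the most significant
  digit: z_k = +1 iff bit (K-1-k) of q is set.\<close>
definition zlev :: "nat \<Rightarrow> nat \<Rightarrow> nat \<Rightarrow> real" where
  "zlev K q k = (if bit q (K - 1 - k) then 1 else -1)"

definition zprod :: "nat \<Rightarrow> nat set \<Rightarrow> nat \<Rightarrow> real" where
  "zprod K S q = (\<Prod>k\<in>S. zlev K q k)"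

definition cvec :: "nat \<Rightarrow> nat set \<Rightarrow> real vec" where
  "cvec K S = vec (2^K) (\<lambda>q. zprod K S q / 2^(K-1))"

definition PK' :: "nat \<Rightarrow> nat set set" where "PK' K = Pow {..<K}"
definition PK :: "nat \<Rightarrow> nat set set" where "PK K = {S \<in> PK' K. S \<noteq> {}}"

definition subsets_list :: "nat \<Rightarrow> nat set list" where
  "subsets_list K = map (\<lambda>m. {k. k < K \<and> bit m k}) [0..<2^K]"

text \<open>Matrix with rows c_S for S in a list (the zero row if the list is empty); the
  restriction matrix below simply omits such vacuous zero rows.\<close>
definition Cmat :: "nat \<Rightarrow> nat set list \<Rightarrow> real mat" where
  "Cmat K Fs = mat_of_rows (2^K) (map (cvec K) Fs)"

definition Fminus :: "nat \<Rightarrow> nat set list \<Rightarrow> nat set list" where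
  "Fminus K Fp = filter (\<lambda>S. S \<in> PK K \<and> S \<notin> set Fp) (subsets_list K)"

definition Fminus' :: "nat \<Rightarrow> nat set list \<Rightarrow> nat set list" where
  "Fminus' K Fp' = filter (\<lambda>S. S \<in> PK' K \<and> S \<notin> set Fp') (subsets_list K)"

definition Rmat :: "nat \<Rightarrow> nat \<Rightarrow> nat set list \<Rightarrow> nat set list \<Rightarrow> real mat" where
  "Rmat K J Fp Fp' = (let Q = 2^K in
     four_block_mat (Cmat K (Fminus K Fp)) (0\<^sub>m (length (Fminus K Fp)) (J * Q))
                    (0\<^sub>m (length (Fminus' K Fp') * J) Q) (mkron (Cmat K (Fminus' K Fp')) (1\<^sub>m J)))"

definition chiL :: "nat \<Rightarrow> nat \<Rightarrow> nat \<Rightarrow> (nat \<Rightarrow> nat) \<Rightarrow> (nat \<Rightarrow> real vec) \<Rightarrow> real mat" where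
  "chiL K J N lev x = mat_of_rows (2^K + J * 2^K)
     (map (\<lambda>i. unit_vec (2^K) (lev i) @\<^sub>v vkron (unit_vec (2^K) (lev i)) (x i)) [0..<N])"

definition olsX :: "nat \<Rightarrow> nat \<Rightarrow> nat \<Rightarrow> (nat \<Rightarrow> nat) \<Rightarrow> (nat \<Rightarrow> real vec)
    \<Rightarrow> nat set list \<Rightarrow> nat set list \<Rightarrow> real mat" where
  "olsX K J N lev x Fp Fp' = mat_of_rows (1 + length Fp + length Fp' * J)
     (map (\<lambda>i. vec_of_list ([1] @ map (\<lambda>S. zprod K S (lev i)) Fp
         @ concat (map (\<lambda>S. map (\<lambda>j. zprod K S (lev i) * x i $ j) [0..<J]) Fp'))) [0..<N])"

definition tau_tilde :: "nat \<Rightarrow> nat \<Rightarrow> nat \<Rightarrow> (nat \<Rightarrow> nat) \<Rightarrow> (nat \<Rightarrow> real vec) \<Rightarrow> real vec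
    \<Rightarrow> nat set list \<Rightarrow> nat set list \<Rightarrow> real vec" where
  "tau_tilde K J N lev x Y Fp Fp' =
     vec (length Fp) (\<lambda>a. 2 * ols_coef (olsX K J N lev x Fp Fp') Y $ (a + 1))"

definition Omega_tilde :: "nat \<Rightarrow> nat \<Rightarrow> nat \<Rightarrow> (nat \<Rightarrow> nat) \<Rightarrow> (nat \<Rightarrow> real vec) \<Rightarrow> real vec
    \<Rightarrow> nat set list \<Rightarrow> nat set list \<Rightarrow> real mat" where
  "Omega_tilde K J N lev x Y Fp Fp' =
     mat (length Fp) (length Fp) (\<lambda>(a,b). 4 * ehw_cov (olsX K J N lev x Fp Fp') Y $$ (a + 1, b + 1))"

definition Yhat_rS :: "nat \<Rightarrow> nat \<Rightarrow> nat \<Rightarrow> (nat \<Rightarrow> nat) \<Rightarrow> (nat \<Rightarrow> real vec) \<Rightarrow> real vec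
    \<Rightarrow> nat set list \<Rightarrow> nat set list \<Rightarrow> real vec" where
  "Yhat_rS K J N lev x Y Fp Fp' =
     vec (2^K) (\<lambda>q. rls_coef (chiL K J N lev x) (Rmat K J Fp Fp') Y $ q)"

definition Psi_rS :: "nat \<Rightarrow> nat \<Rightarrow> nat \<Rightarrow> (nat \<Rightarrow> nat) \<Rightarrow> (nat \<Rightarrow> real vec) \<Rightarrow> real vec
    \<Rightarrow> nat set list \<Rightarrow> nat set list \<Rightarrow> real mat" where
  "Psi_rS K J N lev x Y Fp Fp' =
     mat (2^K) (2^K) (\<lambda>(a,b). rls_cov (chiL K J N lev x) (Rmat K J Fp Fp') Y $$ (a, b))"

end

theory Submission
  imports Defs "Jordan_Normal_Form.Determinant"
begin


lemma det_ne0_of_invertible: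
  assumes A: "(A::real mat) \<in> carrier_mat n n" and inv: "invertible_mat A"
  shows "det A \<noteq> 0"
proof -
  from inv obtain B where AB: "A * B = 1\<^sub>m (dim_row A)" and BA: "B * A = 1\<^sub>m (dim_row B)"
    unfolding invertible_mat_def inverts_mat_def by blast
  have "dim_col B = n" using AB A by (metis index_mult_mat(3) index_one_mat(3) carrier_matD(1))
  moreover have "dim_row B = n" using BA A by (metis index_mult_mat(3) index_one_mat(3) carrier_matD(2))
  ultimately have B: "B \<in> carrier_mat n n" by auto
  have "det (A * B) = 1" using AB A by simp
  thus ?thesis using det_mult[OF A B] by auto
qed

lemma minv_props:
  assumes A: "(A::real mat) \<in> carrier_mat n n" and d: "det A \<noteq> 0"
  shows "minv A \<in> carrier_mat n n" "A * minv A = 1\<^sub>m n" "minv A * A = 1\<^sub>m n"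
proof -
  have U: "A \<in> Units (ring_mat TYPE(real) n undefined)" by (rule det_non_zero_imp_unit[OF A d])
  obtain B where mi: "mat_inverse A = Some B"
    using mat_inverse(1)[OF A, of undefined] U by (cases "mat_inverse A") auto
  from mat_inverse(2)[OF A mi] show "minv A \<in> carrier_mat n n" "A * minv A = 1\<^sub>m n" "minv A * A = 1\<^sub>m n"
    unfolding minv_def mi by auto
qed

lemma self_sprod_0:
  assumes "(v::real vec) \<bullet> v = 0" shows "v = 0\<^sub>v (dim_vec v)"
proof -
  have "(\<Sum>i\<in>{0..<dim_vec v}. v $ i * v $ i) = 0" using assms unfolding scalar_prod_def by simp
  hence "\<forall>i\<in>{0..<dim_vec v}. v $ i * v $ i = 0"
    by (subst (asm) sum_nonneg_eq_0_iff) auto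
  thus ?thesis by (intro eq_vecI) auto
qed

lemma self_sprod_nonneg: "(v::real vec) \<bullet> v \<ge> 0"
  unfolding scalar_prod_def by (intro sum_nonneg) auto

lemma gram_quad:
  assumes M: "(M::real mat) \<in> carrier_mat N p" and v: "v \<in> carrier_vec p"
  shows "v \<bullet> ((transpose_mat M * M) *\<^sub>v v) = (M *\<^sub>v v) \<bullet> (M *\<^sub>v v)"
proof -
  have "(transpose_mat M * M) *\<^sub>v v = transpose_mat M *\<^sub>v (M *\<^sub>v v)"
    using M v by (metis assoc_mult_mat_vec carrier_matD(1) carrier_matI index_transpose_mat(2,3))
  hence "v \<bullet> ((transpose_mat M * M) *\<^sub>v v) = (transpose_mat M *\<^sub>v (M *\<^sub>v v)) \<bullet> v"
    using M v by (metis comm_scalar_prod mult_mat_vec_carrier transpose_carrier_mat)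
  also have "\<dots> = (M *\<^sub>v v) \<bullet> (M *\<^sub>v v)"
    by (rule transpose_vec_mult_scalar[OF M v]) (use M v in auto)
  finally show ?thesis .
qed

lemma det_gram_ne0:
  assumes M: "(M::real mat) \<in> carrier_mat N p"
    and inj: "\<And>v. v \<in> carrier_vec p \<Longrightarrow> M *\<^sub>v v = 0\<^sub>v N \<Longrightarrow> v = 0\<^sub>v p"
  shows "det (transpose_mat M * M) \<noteq> 0"
proof
  assume "det (transpose_mat M * M) = 0"
  then obtain v where v: "v \<in> carrier_vec p" "v \<noteq> 0\<^sub>v p" "(transpose_mat M * M) *\<^sub>v v = 0\<^sub>v p"
    using det_0_iff_vec_prod_zero[of "transpose_mat M * M" p] M by auto
  have "(M *\<^sub>v v) \<bullet> (M *\<^sub>v v) = 0" using gram_quad[OF M v(1)] v by simp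
  hence "M *\<^sub>v v = 0\<^sub>v N" using self_sprod_0 M by fastforce
  thus False using inj v by auto
qed


lemma inv_sym:
  assumes M: "(M::real mat) \<in> carrier_mat n n" and Mi: "Mi \<in> carrier_mat n n"
    and sym: "transpose_mat M = M" and l: "Mi * M = 1\<^sub>m n" and r: "M * Mi = 1\<^sub>m n"
  shows "transpose_mat Mi = Mi"
proof -
  have "transpose_mat Mi = transpose_mat Mi * (M * Mi)" using r Mi by simp
  also have "\<dots> = (transpose_mat Mi * transpose_mat M) * Mi"
    using M Mi sym by (metis assoc_mult_mat transpose_carrier_mat)
  also have "transpose_mat Mi * transpose_mat M = transpose_mat (M * Mi)"
    using M Mi by (metis transpose_mult)
  also have "\<dots> = 1\<^sub>m n" using r by simp
  finally show ?thesis using Mi by simp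
qed

lemma gram_sym: "transpose_mat (transpose_mat (M::real mat) * M) = transpose_mat M * M"
  by (metis transpose_mult transpose_transpose carrier_mat_triv index_transpose_mat(2))


locale absfw =
  fixes A R B Bl D Rr :: "real mat" and Y :: "real vec" and N n m p :: nat
  assumes A: "A \<in> carrier_mat N n" and R: "R \<in> carrier_mat m n" and B: "B \<in> carrier_mat n p"
    and Bl: "Bl \<in> carrier_mat p n" and D: "D \<in> carrier_mat m m" and Rr: "Rr \<in> carrier_mat n m"
    and Y: "Y \<in> carrier_vec N"
    and dA: "det (transpose_mat A * A) \<noteq> 0"
    and BlB: "Bl * B = 1\<^sub>m p"
    and decomp: "B * Bl + transpose_mat R * D * R = 1\<^sub>m n"
    and RB: "R * B = 0\<^sub>m m p"
    and RRr: "R * Rr = 1\<^sub>m m"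
begin

abbreviation "X \<equiv> A * B"
lemma mmv0[simp]: "M \<in> carrier_mat a b \<Longrightarrow> M *\<^sub>v 0\<^sub>v b = (0\<^sub>v a :: real vec)"
  by (intro eq_vecI) (auto simp: scalar_prod_def)
lemma zero_mult_mat_vec[simp]: "v \<in> carrier_vec b \<Longrightarrow> 0\<^sub>m a b *\<^sub>v v = (0\<^sub>v a :: real vec)"
  by (intro eq_vecI) (auto simp: scalar_prod_def)
abbreviation "AtA \<equiv> transpose_mat A * A"
abbreviation "G \<equiv> minv AtA"

lemma X: "X \<in> carrier_mat N p" using A B by simp
lemma AtA: "AtA \<in> carrier_mat n n" using A by simp
lemma G: "G \<in> carrier_mat n n" "AtA * G = 1\<^sub>m n" "G * AtA = 1\<^sub>m n"
  using minv_props[OF AtA dA] by auto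

lemma inj_A: assumes u: "u \<in> carrier_vec n" and Au: "A *\<^sub>v u = 0\<^sub>v N" shows "u = 0\<^sub>v n"
proof -
  have "u = (G * AtA) *\<^sub>v u" using G u by simp
  also have "\<dots> = G *\<^sub>v (transpose_mat A *\<^sub>v (A *\<^sub>v u))"
    using G A u by (metis assoc_mult_mat_vec mult_carrier_mat transpose_carrier_mat mult_mat_vec_carrier)
  also have "\<dots> = 0\<^sub>v n" using Au G A by simp
  finally show ?thesis .
qed

lemma inj_B: assumes v: "v \<in> carrier_vec p" and Bv: "B *\<^sub>v v = 0\<^sub>v n" shows "v = 0\<^sub>v p"
proof -
  have "v = (Bl * B) *\<^sub>v v" using BlB v by simp
  also have "\<dots> = Bl *\<^sub>v (B *\<^sub>v v)" using Bl B v by simp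
  finally show ?thesis using Bv Bl by simp
qed

lemma inj_X: assumes v: "v \<in> carrier_vec p" and Xv: "X *\<^sub>v v = 0\<^sub>v N" shows "v = 0\<^sub>v p"
proof -
  have "A *\<^sub>v (B *\<^sub>v v) = 0\<^sub>v N" using Xv A B v by simp
  hence "B *\<^sub>v v = 0\<^sub>v n" using inj_A B v by simp
  thus ?thesis using inj_B v by simp
qed

lemma dX: "det (transpose_mat X * X) \<noteq> 0"
  using det_gram_ne0[OF X inj_X] by blast

abbreviation "XtX \<equiv> transpose_mat X * X"
abbreviation "H \<equiv> minv XtX"
lemma XtX: "XtX \<in> carrier_mat p p" using X by simp
lemma H: "H \<in> carrier_mat p p" "XtX * H = 1\<^sub>m p" "H * XtX = 1\<^sub>m p"
  using minv_props[OF XtX dX] by auto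

lemma Xt_eq: "transpose_mat X = transpose_mat B * transpose_mat A"
  using A B by (metis transpose_mult)

lemma decomp_vec: assumes t: "t \<in> carrier_vec n" and Rt: "R *\<^sub>v t = 0\<^sub>v m"
  shows "t = B *\<^sub>v (Bl *\<^sub>v t)"
proof -
  have "t = (B * Bl + transpose_mat R * D * R) *\<^sub>v t" using decomp t by simp
  also have "\<dots> = (B * Bl) *\<^sub>v t + (transpose_mat R * D * R) *\<^sub>v t"
    using B Bl R D t by (metis add_mult_distrib_mat_vec mult_carrier_mat transpose_carrier_mat)
  also have "(transpose_mat R * D * R) *\<^sub>v t = (transpose_mat R * D) *\<^sub>v (R *\<^sub>v t)"
    using R D t by (metis assoc_mult_mat_vec mult_carrier_mat transpose_carrier_mat)
  also have "\<dots> = 0\<^sub>v n" using Rt R D by simp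
  also have "(B * Bl) *\<^sub>v t = B *\<^sub>v (Bl *\<^sub>v t)" using B Bl t by simp
  finally show ?thesis using B Bl t by simp
qed

definition "beta = ols_coef X Y"
lemma beta: "beta \<in> carrier_vec p" unfolding beta_def ols_coef_def using H X Y by simp

lemma normal: "transpose_mat X *\<^sub>v (Y - X *\<^sub>v beta) = 0\<^sub>v p"
proof -
  have "transpose_mat X *\<^sub>v (X *\<^sub>v beta) = XtX *\<^sub>v (H *\<^sub>v (transpose_mat X *\<^sub>v Y))"
    unfolding beta_def ols_coef_def using X H Y by simp
  also have "\<dots> = (XtX * H) *\<^sub>v (transpose_mat X *\<^sub>v Y)" using X H Y
    by (metis assoc_mult_mat_vec mult_mat_vec_carrier transpose_carrier_mat XtX)
  also have "\<dots> = transpose_mat X *\<^sub>v Y" using H X Y by simp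
  finally have e: "transpose_mat X *\<^sub>v (X *\<^sub>v beta) = transpose_mat X *\<^sub>v Y" .
  have "transpose_mat X *\<^sub>v (Y - X *\<^sub>v beta) = transpose_mat X *\<^sub>v Y - transpose_mat X *\<^sub>v (X *\<^sub>v beta)"
    using X Y beta by (metis mult_minus_distrib_mat_vec mult_mat_vec_carrier transpose_carrier_mat)
  thus ?thesis unfolding e using X Y by simp
qed

lemma pyth: assumes b': "b' \<in> carrier_vec p"
  shows "ssr A Y (B *\<^sub>v b') = ssr A Y (B *\<^sub>v beta) + (X *\<^sub>v (beta - b')) \<bullet> (X *\<^sub>v (beta - b'))"
proof -
  define r where "r = Y - X *\<^sub>v beta"
  define d where "d = X *\<^sub>v (beta - b')"
  have r: "r \<in> carrier_vec N" unfolding r_def using X Y beta by simp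
  have d: "d \<in> carrier_vec N" unfolding d_def using X beta b' by simp
  have Ab: "\<And>v. v \<in> carrier_vec p \<Longrightarrow> A *\<^sub>v (B *\<^sub>v v) = X *\<^sub>v v" using A B by simp
  have dd: "d = X *\<^sub>v beta - X *\<^sub>v b'" unfolding d_def using X beta b'
    by (metis mult_minus_distrib_mat_vec)
  have e1: "Y - A *\<^sub>v (B *\<^sub>v b') = r + d" unfolding Ab[OF b'] dd r_def
    using X Y beta b' by (intro eq_vecI) auto
  have e2: "Y - A *\<^sub>v (B *\<^sub>v beta) = r" unfolding Ab[OF beta] r_def ..
  have rd: "r \<bullet> d = 0"
  proof -
    have "r \<bullet> d = (transpose_mat X *\<^sub>v r) \<bullet> (beta - b')"
      unfolding d_def using transpose_vec_mult_scalar[OF X, of "beta - b'" r] X r beta b' by simp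
    thus ?thesis using normal r_def beta b' by simp
  qed
  have "(r + d) \<bullet> (r + d) = r \<bullet> r + d \<bullet> d + 2 * (r \<bullet> d)"
    using r d by (simp add: add_scalar_prod_distrib scalar_prod_add_distrib comm_scalar_prod[of d N r])
  hence "ssr A Y (B *\<^sub>v b') = ssr A Y (B *\<^sub>v beta) + d \<bullet> d" unfolding ssr_def e1 e2 rd by simp
  thus ?thesis unfolding d_def .
qed

lemma rls_coef_eq: "rls_coef A R Y = B *\<^sub>v beta"
  unfolding rls_coef_def
proof (rule the_equality)
  have Bb: "B *\<^sub>v beta \<in> carrier_vec n" using B beta by simp
  have RBb: "R *\<^sub>v (B *\<^sub>v beta) = 0\<^sub>v m" using R B beta RB
    by (metis assoc_mult_mat_vec mult_mat_vec_carrier zero_carrier_mat zero_mult_mat_vec ) 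
  have dR: "dim_row R = m" "dim_col A = n" using R A by auto
  show "B *\<^sub>v beta \<in> carrier_vec (dim_col A) \<and> R *\<^sub>v (B *\<^sub>v beta) = 0\<^sub>v (dim_row R) \<and>
    (\<forall>\<theta>'\<in>carrier_vec (dim_col A). R *\<^sub>v \<theta>' = 0\<^sub>v (dim_row R) \<longrightarrow> ssr A Y (B *\<^sub>v beta) \<le> ssr A Y \<theta>')"
  proof (intro conjI ballI impI)
    fix t assume t: "t \<in> carrier_vec (dim_col A)" and Rt: "R *\<^sub>v t = 0\<^sub>v (dim_row R)"
    have te: "t = B *\<^sub>v (Bl *\<^sub>v t)" using decomp_vec t Rt dR by simp
    have "ssr A Y t = ssr A Y (B *\<^sub>v beta) + (X *\<^sub>v (beta - Bl *\<^sub>v t)) \<bullet> (X *\<^sub>v (beta - Bl *\<^sub>v t))"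
      using pyth[of "Bl *\<^sub>v t"] te Bl t dR by simp
    thus "ssr A Y (B *\<^sub>v beta) \<le> ssr A Y t" using self_sprod_nonneg by simp
  qed (use Bb RBb dR in auto)
  fix t assume H: "t \<in> carrier_vec (dim_col A) \<and> R *\<^sub>v t = 0\<^sub>v (dim_row R) \<and>
    (\<forall>\<theta>'\<in>carrier_vec (dim_col A). R *\<^sub>v \<theta>' = 0\<^sub>v (dim_row R) \<longrightarrow> ssr A Y t \<le> ssr A Y \<theta>')"
  hence t: "t \<in> carrier_vec n" and Rt: "R *\<^sub>v t = 0\<^sub>v m" using dR by auto
  have le: "ssr A Y t \<le> ssr A Y (B *\<^sub>v beta)" using H Bb RBb dR by auto
  have te: "t = B *\<^sub>v (Bl *\<^sub>v t)" using decomp_vec t Rt by simp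
  define b1 where "b1 = Bl *\<^sub>v t"
  have b1: "b1 \<in> carrier_vec p" unfolding b1_def using Bl t by simp
  have "ssr A Y t = ssr A Y (B *\<^sub>v beta) + (X *\<^sub>v (beta - b1)) \<bullet> (X *\<^sub>v (beta - b1))"
    using pyth[OF b1] te b1_def by simp
  hence "(X *\<^sub>v (beta - b1)) \<bullet> (X *\<^sub>v (beta - b1)) = 0" using le self_sprod_nonneg[of "X *\<^sub>v (beta - b1)"] by simp
  hence "X *\<^sub>v (beta - b1) = 0\<^sub>v N" using self_sprod_0 X by fastforce
  hence "beta - b1 = 0\<^sub>v p" using inj_X beta b1 by simp
  hence "b1 = beta" using beta b1 proof (intro eq_vecI)
    fix i assume "i < dim_vec beta"
    hence "(beta - b1) $ i = 0\<^sub>v p $ i" using \<open>beta - b1 = 0\<^sub>v p\<close> by simp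
    thus "b1 $ i = beta $ i" using \<open>i < dim_vec beta\<close> beta b1 by simp
  qed (use beta b1 in simp)
  thus "t = B *\<^sub>v beta" using te b1_def by simp
qed

end

lemma minus_zero_mat': "(M::real mat) \<in> carrier_mat a b \<Longrightarrow> M - 0\<^sub>m a b = M"
  by (intro eq_matI) auto

context absfw begin

lemma Rt: "transpose_mat R \<in> carrier_mat n m" using R by simp
lemma At: "transpose_mat A \<in> carrier_mat n N" using A by simp
lemma Bt: "transpose_mat B \<in> carrier_mat p n" using B by simp
lemma Xt: "transpose_mat X \<in> carrier_mat p N" using X by simp

abbreviation "RGR \<equiv> R * G * transpose_mat R"
lemma RG: "R * G \<in> carrier_mat m n" using R G by simp
lemma RGR: "RGR \<in> carrier_mat m m" using R G by simp

lemma dRGR: "det RGR \<noteq> 0"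
proof
  assume "det RGR = 0"
  then obtain v where v: "v \<in> carrier_vec m" "v \<noteq> 0\<^sub>v m" "RGR *\<^sub>v v = 0\<^sub>v m"
    using det_0_iff_vec_prod_zero[OF RGR] by auto
  define w where "w = transpose_mat R *\<^sub>v v"
  define u where "u = G *\<^sub>v w"
  have w: "w \<in> carrier_vec n" unfolding w_def using R v by simp
  have u: "u \<in> carrier_vec n" unfolding u_def using G w by simp
  have "RGR *\<^sub>v v = (R * G) *\<^sub>v w" unfolding w_def using assoc_mult_mat_vec[OF RG Rt v(1)] .
  also have "\<dots> = R *\<^sub>v u" unfolding u_def using assoc_mult_mat_vec[OF R G(1) w] .
  finally have Ru: "R *\<^sub>v u = 0\<^sub>v m" using v by simp
  have "w \<bullet> u = v \<bullet> (R *\<^sub>v u)" unfolding w_def using transpose_vec_mult_scalar[OF R u v(1)] .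
  hence wu: "w \<bullet> u = 0" using Ru v by simp
  have "AtA *\<^sub>v u = (AtA * G) *\<^sub>v w" unfolding u_def using assoc_mult_mat_vec[OF AtA G(1) w] by simp
  hence wAu: "w = AtA *\<^sub>v u" using G(2) w by simp
  have "u \<bullet> (AtA *\<^sub>v u) = 0" using wu wAu comm_scalar_prod[OF w u] by simp
  hence "(A *\<^sub>v u) \<bullet> (A *\<^sub>v u) = 0" using gram_quad[OF A u] by simp
  hence "A *\<^sub>v u = 0\<^sub>v N" using self_sprod_0 A by fastforce
  hence "u = 0\<^sub>v n" using inj_A u by simp
  hence w0: "w = 0\<^sub>v n" using wAu AtA by simp
  have "v = (transpose_mat (R * Rr)) *\<^sub>v v" using RRr v by simp
  also have "\<dots> = (transpose_mat Rr * transpose_mat R) *\<^sub>v v" using transpose_mult[OF R Rr] by simp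
  also have "\<dots> = transpose_mat Rr *\<^sub>v w" unfolding w_def
    using assoc_mult_mat_vec[OF _ Rt v(1), of "transpose_mat Rr" m] Rr by simp
  finally show False using w0 Rr v by simp
qed

abbreviation "Hr \<equiv> minv RGR"
lemma Hr: "Hr \<in> carrier_mat m m" "RGR * Hr = 1\<^sub>m m" "Hr * RGR = 1\<^sub>m m"
  using minv_props[OF RGR dRGR] by auto

abbreviation "P \<equiv> 1\<^sub>m n - rls_M A R * R"
lemma M_eq: "rls_M A R = G * transpose_mat R * Hr" unfolding rls_M_def ..
lemma GRt: "G * transpose_mat R \<in> carrier_mat n m" using G Rt by simp
lemma M: "rls_M A R \<in> carrier_mat n m" using M_eq GRt Hr by simp
lemma MR: "rls_M A R * R \<in> carrier_mat n n" using M R by simp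
lemma P: "P \<in> carrier_mat n n" using minus_carrier_mat[OF MR] .

lemma RP: "R * P = 0\<^sub>m m n"
proof -
  have "R * P = R * 1\<^sub>m n - R * (rls_M A R * R)"
    using mult_minus_distrib_mat[OF R one_carrier_mat MR] .
  also have "R * (rls_M A R * R) = (R * rls_M A R) * R" using assoc_mult_mat[OF R M R] by simp
  also have "R * rls_M A R = (R * (G * transpose_mat R)) * Hr" unfolding M_eq
    using assoc_mult_mat[OF R GRt Hr(1)] by simp
  also have "R * (G * transpose_mat R) = RGR" using assoc_mult_mat[OF R G(1) Rt] by simp
  finally show ?thesis using Hr R by simp
qed

lemma Gsym: "transpose_mat G = G" using inv_sym[OF AtA G(1) gram_sym G(3) G(2)] .
lemma Hsym: "transpose_mat H = H" using inv_sym[OF XtX H(1) gram_sym H(3) H(2)] .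

lemma uniq:
  assumes Z: "Z \<in> carrier_mat n N" and RZ: "R * Z = 0\<^sub>m m N"
    and T: "transpose_mat B * AtA * Z = transpose_mat B * transpose_mat A"
  shows "Z = B * H * transpose_mat X"
proof -
  have RtD: "transpose_mat R * D \<in> carrier_mat n m" using Rt D by simp
  have BBl: "B * Bl \<in> carrier_mat n n" using B Bl by simp
  have RDR: "transpose_mat R * D * R \<in> carrier_mat n n" using RtD R by simp
  have "Z = (B * Bl + transpose_mat R * D * R) * Z" using decomp Z by simp
  also have "\<dots> = B * Bl * Z + transpose_mat R * D * R * Z"
    using add_mult_distrib_mat[OF BBl RDR Z] .
  also have "transpose_mat R * D * R * Z = transpose_mat R * D * (R * Z)"
    using assoc_mult_mat[OF RtD R Z] .
  also have "\<dots> = 0\<^sub>m n N" using RZ right_mult_zero_mat[OF RtD] by simp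
  also have "B * Bl * Z = B * (Bl * Z)" using assoc_mult_mat[OF B Bl Z] .
  finally have Z1: "Z = B * (Bl * Z)" using B Bl Z by simp
  have BlZ: "Bl * Z \<in> carrier_mat p N" using Bl Z by simp
  have BtAtA: "transpose_mat B * AtA \<in> carrier_mat p n" using Bt AtA by simp
  have "transpose_mat B * AtA * B = transpose_mat B * (AtA * B)" using assoc_mult_mat[OF Bt AtA B] .
  also have "AtA * B = transpose_mat A * X" using assoc_mult_mat[OF At A B] .
  also have "transpose_mat B * (transpose_mat A * X) = XtX" unfolding Xt_eq
    using assoc_mult_mat[OF Bt At X] by simp
  finally have "XtX = transpose_mat B * AtA * B" by simp
  hence "XtX * (Bl * Z) = transpose_mat B * AtA * (B * (Bl * Z))"
    using assoc_mult_mat[OF BtAtA B BlZ] by simp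
  also have "\<dots> = transpose_mat X" unfolding Z1[symmetric] T Xt_eq ..
  finally have e: "XtX * (Bl * Z) = transpose_mat X" .
  have "Bl * Z = H * XtX * (Bl * Z)" unfolding H(3) using left_mult_one_mat[OF BlZ] by simp
  also have "\<dots> = H * transpose_mat X" using assoc_mult_mat[OF H(1) XtX BlZ] e by simp
  finally show ?thesis using Z1 assoc_mult_mat[OF B H(1) Xt] by simp
qed

lemma PGA: "P * G * transpose_mat A = B * H * transpose_mat X"
proof (rule uniq)
  have PG: "P * G \<in> carrier_mat n n" using P G by simp
  show "P * G * transpose_mat A \<in> carrier_mat n N" using PG At by simp
  have "R * (P * G * transpose_mat A) = R * (P * G) * transpose_mat A" using assoc_mult_mat[OF R PG At] by simp
  also have "R * (P * G) = (R * P) * G" using assoc_mult_mat[OF R P G(1)] by simp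
  finally show "R * (P * G * transpose_mat A) = 0\<^sub>m m N" unfolding RP using G At by simp
  have BtR: "transpose_mat B * transpose_mat R = 0\<^sub>m p m"
    using RB transpose_mult[OF R B] by simp
  have AtAP: "AtA * P \<in> carrier_mat n n" using AtA P by simp
  have "transpose_mat B * AtA * (P * G * transpose_mat A)
      = transpose_mat B * (AtA * (P * G * transpose_mat A))" using assoc_mult_mat[OF Bt AtA mult_carrier_mat[OF PG At]] .
  also have "AtA * (P * G * transpose_mat A) = (AtA * P * G) * transpose_mat A"
    using assoc_mult_mat[OF AtA PG At] assoc_mult_mat[OF AtA P G(1)] by simp
  also have "AtA * P * G = 1\<^sub>m n - transpose_mat R * Hr * R * G"
  proof -
    have GRtHr: "G * transpose_mat R * Hr \<in> carrier_mat n m" using GRt Hr by simp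
    have GRHR: "G * transpose_mat R * Hr * R \<in> carrier_mat n n" using GRtHr R by simp
    have "AtA * P = AtA * 1\<^sub>m n - AtA * (G * transpose_mat R * Hr * R)" unfolding M_eq
      using mult_minus_distrib_mat[OF AtA one_carrier_mat GRHR] .
    also have "AtA * (G * transpose_mat R * Hr * R) = transpose_mat R * Hr * R"
    proof -
      have "AtA * (G * transpose_mat R * Hr * R) = AtA * (G * (transpose_mat R * Hr * R))"
        using assoc_mult_mat[OF G(1) Rt Hr(1)] assoc_mult_mat[OF GRt Hr(1) R]
          assoc_mult_mat[OF G(1) mult_carrier_mat[OF Rt Hr(1)] R] by simp
      also have "\<dots> = (AtA * G) * (transpose_mat R * Hr * R)"
        using assoc_mult_mat[OF AtA G(1), of "transpose_mat R * Hr * R" n] Rt Hr R by simp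
      finally show ?thesis using G(2) Rt Hr R by simp
    qed
    finally have "AtA * P * G = (AtA - transpose_mat R * Hr * R) * G" using right_mult_one_mat[OF AtA] by simp
    also have "\<dots> = 1\<^sub>m n - transpose_mat R * Hr * R * G"
      using minus_mult_distrib_mat[OF AtA _ G(1), of "transpose_mat R * Hr * R"] Rt Hr R G(2) by simp
    finally show ?thesis .
  qed
  also have "transpose_mat B * ((1\<^sub>m n - transpose_mat R * Hr * R * G) * transpose_mat A) = transpose_mat B * transpose_mat A"
  proof -
    have RHRG: "transpose_mat R * Hr * R * G \<in> carrier_mat n n"
      using mult_carrier_mat[OF mult_carrier_mat[OF mult_carrier_mat[OF Rt Hr(1)] R] G(1)] .
    have "(1\<^sub>m n - transpose_mat R * Hr * R * G) * transpose_mat A = transpose_mat A - transpose_mat R * Hr * R * G * transpose_mat A"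
      using minus_mult_distrib_mat[OF one_carrier_mat RHRG At] At by simp
    hence "transpose_mat B * ((1\<^sub>m n - transpose_mat R * Hr * R * G) * transpose_mat A)
        = transpose_mat B * transpose_mat A - transpose_mat B * (transpose_mat R * Hr * R * G * transpose_mat A)"
      using mult_minus_distrib_mat[OF Bt At, of "transpose_mat R * Hr * R * G * transpose_mat A"] RHRG At by simp
    also have "transpose_mat B * (transpose_mat R * Hr * R * G * transpose_mat A)
       = (transpose_mat B * transpose_mat R) * (Hr * R * G * transpose_mat A)"
    proof -
      have c: "Hr * R * G * transpose_mat A \<in> carrier_mat m N"
        using mult_carrier_mat[OF mult_carrier_mat[OF mult_carrier_mat[OF Hr(1) R] G(1)] At] .
      have "transpose_mat R * Hr * R * G * transpose_mat A = transpose_mat R * (Hr * R * G * transpose_mat A)"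
        using assoc_mult_mat[OF Rt Hr(1) R] assoc_mult_mat[OF Rt mult_carrier_mat[OF Hr(1) R] G(1)]
          assoc_mult_mat[OF Rt mult_carrier_mat[OF mult_carrier_mat[OF Hr(1) R] G(1)] At] by simp
      thus ?thesis using assoc_mult_mat[OF Bt Rt c] by simp
    qed
    also have "\<dots> = 0\<^sub>m p N" unfolding BtR using Hr R G At by simp
    finally show ?thesis using minus_zero_mat'[OF mult_carrier_mat[OF Bt At]] by simp
  qed
  finally show "transpose_mat B * AtA * (P * G * transpose_mat A) = transpose_mat B * transpose_mat A" .
qed

end


lemma sand_form:
  assumes P: "(P::real mat) \<in> carrier_mat a n" and G: "G \<in> carrier_mat n n" and Gs: "transpose_mat G = G"
    and A: "A \<in> carrier_mat N n" and Dg: "Dg \<in> carrier_mat N N"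
  shows "P * (G * transpose_mat A * Dg * A * G) * transpose_mat P
       = (P * G * transpose_mat A) * Dg * transpose_mat (P * G * transpose_mat A)"
proof -
  have At: "transpose_mat A \<in> carrier_mat n N" using A by simp
  have Pt: "transpose_mat P \<in> carrier_mat n a" using P by simp
  have PG: "P * G \<in> carrier_mat a n" using P G by simp
  have tr: "transpose_mat (P * G * transpose_mat A) = A * (G * transpose_mat P)"
    using transpose_mult[OF PG At] transpose_mult[OF P G] Gs by simp
  have GPt: "G * transpose_mat P \<in> carrier_mat n a" using G Pt by simp
  have AGPt: "A * (G * transpose_mat P) \<in> carrier_mat N a" using A GPt by simp
  have DAGPt: "Dg * (A * (G * transpose_mat P)) \<in> carrier_mat N a" using Dg AGPt by simp
  have AtD: "transpose_mat A * (Dg * (A * (G * transpose_mat P))) \<in> carrier_mat n a" using At DAGPt by simp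
  have GAt: "G * transpose_mat A \<in> carrier_mat n N" using G At by simp
  have GAtD: "G * transpose_mat A * Dg \<in> carrier_mat n N" using GAt Dg by simp
  have GAtDA: "G * transpose_mat A * Dg * A \<in> carrier_mat n n" using GAtD A by simp
  have T3: "G * transpose_mat A * Dg * A * G \<in> carrier_mat n n" using GAtDA G by simp
  have PGAt: "P * G * transpose_mat A \<in> carrier_mat a N" using PG At by simp
  have "P * (G * transpose_mat A * Dg * A * G) * transpose_mat P = P * ((G * transpose_mat A * Dg * A * G) * transpose_mat P)"
    using assoc_mult_mat[OF P T3 Pt] .
  also have "(G * transpose_mat A * Dg * A * G) * transpose_mat P = (G * transpose_mat A * Dg * A) * (G * transpose_mat P)"
    using assoc_mult_mat[OF GAtDA G Pt] .
  also have "\<dots> = (G * transpose_mat A * Dg) * (A * (G * transpose_mat P))"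
    using assoc_mult_mat[OF GAtD A GPt] .
  also have "\<dots> = (G * transpose_mat A) * (Dg * (A * (G * transpose_mat P)))"
    using assoc_mult_mat[OF GAt Dg AGPt] .
  also have "\<dots> = G * (transpose_mat A * (Dg * (A * (G * transpose_mat P))))"
    using assoc_mult_mat[OF G At DAGPt] .
  also have "P * \<dots> = (P * G) * (transpose_mat A * (Dg * (A * (G * transpose_mat P))))"
    using assoc_mult_mat[OF P G AtD] by simp
  also have "\<dots> = (P * G * transpose_mat A) * (Dg * (A * (G * transpose_mat P)))"
    using assoc_mult_mat[OF PG At DAGPt] by simp
  also have "\<dots> = (P * G * transpose_mat A) * Dg * (A * (G * transpose_mat P))"
    using assoc_mult_mat[OF PGAt Dg AGPt] by simp
  finally show ?thesis unfolding tr .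
qed

context absfw begin

lemma rls_cov_eq: "rls_cov A R Y = B * ehw_cov X Y * transpose_mat B"
proof -
  have e: "rls_resid A R Y = ols_resid X Y"
    unfolding rls_resid_def ols_resid_def rls_coef_eq beta_def[symmetric] using A B beta by simp
  define Dg where "Dg = mat_diag N (\<lambda>i. (ols_resid X Y $ i)^2)"
  have Dg: "Dg \<in> carrier_mat N N" unfolding Dg_def by simp
  have dA: "dim_row A = N" "dim_row X = N" using A X by auto
  have "rls_cov A R Y = P * (G * transpose_mat A * Dg * A * G) * transpose_mat P"
    unfolding rls_cov_def Let_def sandwich_def e dA Dg_def using A by simp
  also have "\<dots> = (P * G * transpose_mat A) * Dg * transpose_mat (P * G * transpose_mat A)"
    by (rule sand_form[OF P G(1) Gsym A Dg])
  also have "\<dots> = (B * H * transpose_mat X) * Dg * transpose_mat (B * H * transpose_mat X)"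
    unfolding PGA ..
  also have "\<dots> = B * (H * transpose_mat X * Dg * X * H) * transpose_mat B"
    by (rule sand_form[OF B H(1) Hsym X Dg, symmetric])
  also have "\<dots> = B * ehw_cov X Y * transpose_mat B"
    unfolding ehw_cov_def sandwich_def dA Dg_def ..
  finally show ?thesis .
qed

end

unbundle bit_operations_syntax
lemma bit_ge: "(q::nat) < 2^K \<Longrightarrow> K \<le> m \<Longrightarrow> \<not> bit q m"
proof -
  assume "q < 2^K" "K \<le> m"
  hence "q < 2^m" by (meson order_less_le_trans one_le_numeral power_increasing)
  thus ?thesis by (simp add: bit_nat_def)
qed
lemma bit_add_pow: assumes "(q::nat) < 2^K" shows "bit (q + 2^K) m = (m = K \<or> bit q m)"
proof -
  have "q + 2^K = q OR 2^K"
    by (rule disjunctive_add_eq_or) (use assms bit_ge in \<open>simp add: and_exp_eq_0_iff_not_bit\<close>)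
  thus ?thesis by (auto simp: bit_or_iff bit_exp_iff)
qed


definition wb :: "nat \<Rightarrow> nat \<Rightarrow> real" where "wb q m = (if bit q m then 1 else -1)"

lemma split_sum_pow: "(\<Sum>q<(2::nat)^Suc K. f q) = (\<Sum>q<2^K. f q) + (\<Sum>q<2^K. f (q + 2^K))"
proof -
  have "{..<2^Suc K} = {0..<2^K} \<union> {2^K..<2^K + (2::nat)^K}" by auto
  hence "(\<Sum>q<2^Suc K. f q) = (\<Sum>q\<in>{0..<2^K}. f q) + (\<Sum>q\<in>{0+2^K..<2^K + 2^K}. f q)"
    by (simp add: sum.union_disjoint)
  also have "(\<Sum>q\<in>{0+2^K..<2^K + 2^K}. f q) = (\<Sum>q\<in>{0..<2^K}. f (q + 2^K))"
    by (rule sum.shift_bounds_nat_ivl)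
  finally show ?thesis by (simp add: lessThan_atLeast0)
qed

lemma prod_split_K:
  assumes "V \<subseteq> {..<Suc K}"
  shows "(\<Prod>m\<in>V. wb q m) = (if K \<in> V then wb q K else 1) * (\<Prod>m\<in>V - {K}. wb q m)"
proof (cases "K \<in> V")
  case True
  have "finite V" using assms finite_subset by blast
  thus ?thesis using True by (simp add: prod.remove)
next
  case False thus ?thesis by simp
qed

lemma prod_shift:
  assumes "V \<subseteq> {..<Suc K}" "q < 2^K"
  shows "(\<Prod>m\<in>V - {K}. wb (q + 2^K) m) = (\<Prod>m\<in>V - {K}. wb q m)"
  by (rule prod.cong) (use assms bit_add_pow in \<open>auto simp: wb_def\<close>)

lemma walsh2:
  "V \<subseteq> {..<K} \<Longrightarrow> V' \<subseteq> {..<K} \<Longrightarrow>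
   (\<Sum>q<2^K. (\<Prod>m\<in>V. wb q m) * (\<Prod>m\<in>V'. wb q m)) = (if V = V' then 2^K else 0)"
proof (induction K arbitrary: V V')
  case 0 thus ?case by simp
next
  case (Suc K)
  define g where "g q = (\<Prod>m\<in>V - {K}. wb q m) * (\<Prod>m\<in>V' - {K}. wb q m)" for q
  define sV where "sV = (if K \<in> V then -1 else (1::real))"
  define sV' where "sV' = (if K \<in> V' then -1 else (1::real))"
  have s1: "V - {K} \<subseteq> {..<K}" "V' - {K} \<subseteq> {..<K}" using Suc.prems by auto
  have IH: "(\<Sum>q<2^K. g q) = (if V - {K} = V' - {K} then 2^K else 0)"
    unfolding g_def by (rule Suc.IH[OF s1])
  have wK: "q < 2^K \<Longrightarrow> wb q K = -1" for q using bit_ge[of q K K] by (simp add: wb_def)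
  have wK2: "q < 2^K \<Longrightarrow> wb (q + 2^K) K = 1" for q using bit_add_pow[of q K K] by (simp add: wb_def)
  have a: "(\<Prod>m\<in>V. wb q m) = sV * (\<Prod>m\<in>V - {K}. wb q m)"
    "(\<Prod>m\<in>V'. wb q m) = sV' * (\<Prod>m\<in>V' - {K}. wb q m)" if "q < 2^K" for q
  proof -
    have w: "wb q K = -1" using wK[OF that] .
    show "(\<Prod>m\<in>V. wb q m) = sV * (\<Prod>m\<in>V - {K}. wb q m)"
      unfolding prod_split_K[OF Suc.prems(1), of q] w sV_def ..
    show "(\<Prod>m\<in>V'. wb q m) = sV' * (\<Prod>m\<in>V' - {K}. wb q m)"
      unfolding prod_split_K[OF Suc.prems(2), of q] w sV'_def ..
  qed
  have b: "(\<Prod>m\<in>V. wb (q + 2^K) m) = (\<Prod>m\<in>V - {K}. wb q m)"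
    "(\<Prod>m\<in>V'. wb (q + 2^K) m) = (\<Prod>m\<in>V' - {K}. wb q m)" if "q < 2^K" for q
  proof -
    have w: "wb (q + 2^K) K = 1" using wK2[OF that] .
    show "(\<Prod>m\<in>V. wb (q + 2^K) m) = (\<Prod>m\<in>V - {K}. wb q m)"
      unfolding prod_split_K[OF Suc.prems(1), of "q + 2^K"] w prod_shift[OF Suc.prems(1) that] by simp
    show "(\<Prod>m\<in>V'. wb (q + 2^K) m) = (\<Prod>m\<in>V' - {K}. wb q m)"
      unfolding prod_split_K[OF Suc.prems(2), of "q + 2^K"] w prod_shift[OF Suc.prems(2) that] by simp
  qed
  have f1: "q < 2^K \<Longrightarrow> (\<Prod>m\<in>V. wb q m) * (\<Prod>m\<in>V'. wb q m) = sV * sV' * g q" for q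
    unfolding g_def using a by (simp add: mult_ac)
  have f2: "q < 2^K \<Longrightarrow> (\<Prod>m\<in>V. wb (q + 2^K) m) * (\<Prod>m\<in>V'. wb (q + 2^K) m) = g q" for q
    unfolding g_def using b by simp
  have "(\<Sum>q<2^Suc K. (\<Prod>m\<in>V. wb q m) * (\<Prod>m\<in>V'. wb q m)) = (\<Sum>q<2^K. sV * sV' * g q) + (\<Sum>q<2^K. g q)"
    unfolding split_sum_pow using f1 f2 by simp
  also have "\<dots> = (sV * sV' + 1) * (\<Sum>q<2^K. g q)" by (simp add: sum_distrib_left distrib_right sum.distrib mult.assoc)
  also have "\<dots> = (if V = V' then 2^Suc K else 0)"
  proof (cases "(K \<in> V) = (K \<in> V')")
    case True
    hence "V = V' \<longleftrightarrow> V - {K} = V' - {K}" by blast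
    moreover have "sV * sV' = 1" using True sV_def sV'_def by auto
    ultimately show ?thesis unfolding IH by simp
  next
    case False
    hence "V \<noteq> V'" by blast
    moreover have "sV * sV' = -1" using False sV_def sV'_def by auto
    ultimately show ?thesis by simp
  qed
  finally show ?case .
qed

lemma bits_differ:
  assumes "(q::nat) < 2^K" "q' < 2^K" "q \<noteq> q'"
  shows "\<exists>m<K. bit q m \<noteq> bit q' m"
proof (rule ccontr)
  assume "\<not> ?thesis"
  hence "\<forall>m. bit q m = bit q' m" using bit_ge assms by (metis not_le)
  hence "q = q'" by (simp add: bit_eq_iff)
  thus False using assms by simp
qed

lemma walsh_complete:
  assumes "q < 2^K" "q' < 2^K"
  shows "(\<Sum>V\<in>Pow {..<K}. (\<Prod>m\<in>V. wb q m) * (\<Prod>m\<in>V. wb q' m)) = (if q = q' then 2^K else 0)"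
proof -
  have "(\<Sum>V\<in>Pow {..<K}. (\<Prod>m\<in>V. wb q m) * (\<Prod>m\<in>V. wb q' m))
      = (\<Sum>V\<in>Pow {..<K}. (\<Prod>m\<in>V. wb q m * wb q' m) * (\<Prod>m\<in>{..<K}-V. 1))"
    by (simp add: prod.distrib)
  also have "\<dots> = (\<Prod>m<K. wb q m * wb q' m + 1)" by (rule prod_add[symmetric]) simp
  also have "\<dots> = (if q = q' then 2^K else 0)"
  proof (cases "q = q'")
    case True
    have "(\<Prod>m<K. wb q m * wb q' m + 1) = (\<Prod>m<K. 2::real)"
      by (rule prod.cong) (auto simp: True wb_def)
    thus ?thesis using True by simp
  next
    case False
    then obtain m where "m < K" "bit q m \<noteq> bit q' m" using bits_differ assms by blast
    hence "wb q m * wb q' m + 1 = 0" by (auto simp: wb_def)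
    hence "(\<Prod>m<K. wb q m * wb q' m + 1) = 0" using \<open>m < K\<close>
      by (metis finite_lessThan lessThan_iff prod_zero_iff)
    thus ?thesis using False by simp
  qed
  finally show ?thesis .
qed


lemma L1: "(\<Sum>k<Suc a*b. g k) = (\<Sum>k<a*b. g k) + (\<Sum>k\<in>{a*b..<a*b+b}. (g::nat\<Rightarrow>real) k)"
proof -
  have "{..<Suc a * b} = {..<a*b} \<union> {a*b..<a*b+b}" by auto
  moreover have "(\<Sum>k\<in>{..<a*b} \<union> {a*b..<a*b+b}. g k) = (\<Sum>k<a*b. g k) + (\<Sum>k\<in>{a*b..<a*b+b}. g k)"
    by (rule sum.union_disjoint) auto
  ultimately show ?thesis by simp
qed
lemma L2: "(\<Sum>k\<in>{a*b..<a*b+b}. (g::nat\<Rightarrow>real) k) = (\<Sum>k<b. g (k + a*b))"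
proof -
  have "a*b+b = b + a*b" by (rule add.commute)
  hence "{a*b..<a*b+b} = {0 + a*b..<b + a*b}" unfolding add_0 by (rule arg_cong)
  moreover have "(\<Sum>k\<in>{0 + a*b..<b + a*b}. g k) = (\<Sum>k\<in>{0..<b}. g (k + a*b))"
    by (rule sum.shift_bounds_nat_ivl)
  ultimately show ?thesis by (simp add: lessThan_atLeast0)
qed
lemma sum_div_mod: "(\<Sum>k<(a::nat)*b. f (k div b) (k mod b)) = (\<Sum>k1<a. \<Sum>k2<b. f k1 k2 :: real)"
proof (induction a)
  case 0 thus ?case by simp
next
  case (Suc a)
  have "(\<Sum>k<Suc a*b. f (k div b) (k mod b)) = (\<Sum>k<a*b. f (k div b) (k mod b)) + (\<Sum>k<b. f ((k + a*b) div b) ((k + a*b) mod b))"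
    unfolding L1 L2 ..
  also have "(\<Sum>k<b. f ((k + a*b) div b) ((k + a*b) mod b)) = (\<Sum>k2<b. f a k2)"
  proof (rule sum.cong)
    fix k assume "k \<in> {..<b}"
    hence "k < b" by simp
    hence "(k + a*b) div b = a" "(k + a*b) mod b = k" by simp_all
    thus "f ((k + a*b) div b) ((k + a*b) mod b) = f a k" by simp
  qed simp
  finally show ?case using Suc.IH by simp
qed
lemma mkron_carrier[simp]: "mkron A B \<in> carrier_mat (dim_row A * dim_row B) (dim_col A * dim_col B)"
  "dim_row (mkron A B) = dim_row A * dim_row B" "dim_col (mkron A B) = dim_col A * dim_col B"
  unfolding mkron_def by auto

lemma div_mod_lt: "i < a * b \<Longrightarrow> i div b < a" "i < a * b \<Longrightarrow> i mod b < (b::nat)"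
  by (simp add: less_mult_imp_div_less) (cases "b = 0", auto)

lemma mkron_index: "i < dim_row A * dim_row B \<Longrightarrow> j < dim_col A * dim_col B \<Longrightarrow>
  mkron A B $$ (i,j) = A $$ (i div dim_row B, j div dim_col B) * B $$ (i mod dim_row B, j mod dim_col B)"
  unfolding mkron_def by simp

lemma mult_index_sum: "i < dim_row M1 \<Longrightarrow> j < dim_col M2 \<Longrightarrow> dim_col M1 = dim_row M2 \<Longrightarrow>
  (M1 * M2) $$ (i,j) = (\<Sum>k<dim_row M2. M1 $$ (i,k) * M2 $$ (k,j))"
  by (simp add: scalar_prod_def lessThan_atLeast0)

lemma mkron_mult:
  assumes "dim_col A = dim_row C" "dim_col B = dim_row D"
  shows "mkron A B * mkron C D = mkron (A * C) (B * D)"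
proof (rule eq_matI)
  fix i j assume i: "i < dim_row (mkron (A * C) (B * D))" and j: "j < dim_col (mkron (A * C) (B * D))"
  let ?rb = "dim_row B" and ?cd = "dim_col D"
  have i0: "i < dim_row A * dim_row B" using i by simp
  have j0: "j < dim_col C * dim_col D" using j by simp
  have i1: "i div ?rb < dim_row A" "i mod ?rb < ?rb" using i0 div_mod_lt by auto
  have j1: "j div ?cd < dim_col C" "j mod ?cd < ?cd" using j0 div_mod_lt by auto
  have "(mkron A B * mkron C D) $$ (i,j) = (\<Sum>k<dim_col A * dim_col B. mkron A B $$ (i,k) * mkron C D $$ (k,j))"
    using mult_index_sum[of i "mkron A B" j "mkron C D"] i0 j0 assms by simp
  also have "\<dots> = (\<Sum>k<dim_col A * dim_col B. (A $$ (i div ?rb, k div dim_col B) * C $$ (k div dim_col B, j div ?cd))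
       * (B $$ (i mod ?rb, k mod dim_col B) * D $$ (k mod dim_col B, j mod ?cd)))"
  proof (rule sum.cong)
    fix k assume "k \<in> {..<dim_col A * dim_col B}"
    hence k: "k < dim_col A * dim_col B" by simp
    have "mkron A B $$ (i,k) = A $$ (i div ?rb, k div dim_col B) * B $$ (i mod ?rb, k mod dim_col B)"
      by (rule mkron_index[OF i0 k])
    moreover have "mkron C D $$ (k,j) = C $$ (k div dim_col B, j div ?cd) * D $$ (k mod dim_col B, j mod ?cd)"
      using mkron_index[of k C D j] k j0 assms by simp
    ultimately show "mkron A B $$ (i,k) * mkron C D $$ (k,j) = (A $$ (i div ?rb, k div dim_col B) * C $$ (k div dim_col B, j div ?cd))
       * (B $$ (i mod ?rb, k mod dim_col B) * D $$ (k mod dim_col B, j mod ?cd))" by (simp only: mult_ac)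
  qed simp
  also have "\<dots> = (\<Sum>k1<dim_col A. \<Sum>k2<dim_col B. (A $$ (i div ?rb, k1) * C $$ (k1, j div ?cd))
       * (B $$ (i mod ?rb, k2) * D $$ (k2, j mod ?cd)))"
    by (rule sum_div_mod)
  also have "\<dots> = (\<Sum>k1<dim_col A. A $$ (i div ?rb, k1) * C $$ (k1, j div ?cd)) * (\<Sum>k2<dim_col B. B $$ (i mod ?rb, k2) * D $$ (k2, j mod ?cd))"
    by (simp only: sum_product)
  also have "\<dots> = (A * C) $$ (i div ?rb, j div ?cd) * (B * D) $$ (i mod ?rb, j mod ?cd)"
    using mult_index_sum[of "i div ?rb" A "j div ?cd" C] mult_index_sum[of "i mod ?rb" B "j mod ?cd" D] i1 j1 assms
    by simp
  also have "\<dots> = mkron (A * C) (B * D) $$ (i,j)"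
    using mkron_index[of i "A * C" "B * D" j] i0 j0 by simp
  finally show "(mkron A B * mkron C D) $$ (i,j) = mkron (A * C) (B * D) $$ (i,j)" .
qed (use assms in auto)

lemma mkron_transpose: "transpose_mat (mkron A B) = mkron (transpose_mat A) (transpose_mat B)"
proof (rule eq_matI)
  fix i j assume "i < dim_row (mkron (transpose_mat A) (transpose_mat B))" "j < dim_col (mkron (transpose_mat A) (transpose_mat B))"
  thus "transpose_mat (mkron A B) $$ (i, j) = mkron (transpose_mat A) (transpose_mat B) $$ (i, j)"
    using div_mod_lt[of i "dim_col A" "dim_col B"] div_mod_lt[of j "dim_row A" "dim_row B"]
    by (simp add: mkron_index)
qed auto

lemma mkron_one: "mkron (1\<^sub>m a) (1\<^sub>m b) = 1\<^sub>m (a * b)"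
proof (rule eq_matI)
  fix i j assume "i < dim_row (1\<^sub>m (a * b))" "j < dim_col (1\<^sub>m (a * b))"
  hence ij: "i < a * b" "j < a * b" by auto
  have "(i div b = j div b \<and> i mod b = j mod b) = (i = j)" by (metis div_mult_mod_eq)
  thus "mkron (1\<^sub>m a) (1\<^sub>m b) $$ (i, j) = 1\<^sub>m (a * b) $$ (i, j)"
    using ij div_mod_lt[of i a b] div_mod_lt[of j a b] by (auto simp: mkron_index)
qed auto

lemma mkron_add: "dim_row A = dim_row A' \<Longrightarrow> dim_col A = dim_col A' \<Longrightarrow> mkron (A + A') B = mkron A B + mkron A' B"
proof (rule eq_matI)
  fix i j assume d: "dim_row A = dim_row A'" "dim_col A = dim_col A'" and
    "i < dim_row (mkron A B + mkron A' B)" "j < dim_col (mkron A B + mkron A' B)"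
  thus "mkron (A + A') B $$ (i, j) = (mkron A B + mkron A' B) $$ (i, j)"
    using div_mod_lt[of i "dim_row A" "dim_row B"] div_mod_lt[of j "dim_col A" "dim_col B"]
    by (simp add: mkron_index distrib_right)
qed auto

lemma mkron_smult: "mkron (c \<cdot>\<^sub>m A) B = c \<cdot>\<^sub>m mkron A B"
proof (rule eq_matI)
  fix i j assume "i < dim_row (c \<cdot>\<^sub>m mkron A B)" "j < dim_col (c \<cdot>\<^sub>m mkron A B)"
  thus "mkron (c \<cdot>\<^sub>m A) B $$ (i, j) = (c \<cdot>\<^sub>m mkron A B) $$ (i, j)"
    using div_mod_lt[of i "dim_row A" "dim_row B"] div_mod_lt[of j "dim_col A" "dim_col B"]
    by (simp add: mkron_index)
qed auto

lemma mkron_zero: "mkron (0\<^sub>m a b) B = 0\<^sub>m (a * dim_row B) (b * dim_col B)"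
proof (rule eq_matI)
  fix i j assume "i < dim_row (0\<^sub>m (a * dim_row B) (b * dim_col B))" "j < dim_col (0\<^sub>m (a * dim_row B) (b * dim_col B))"
  thus "mkron (0\<^sub>m a b) B $$ (i, j) = 0\<^sub>m (a * dim_row B) (b * dim_col B) $$ (i, j)"
    using div_mod_lt[of i a "dim_row B"] div_mod_lt[of j b "dim_col B"]
    by (simp add: mkron_index)
qed auto


lemma zlev_wb: "k < K \<Longrightarrow> zlev K q k = wb q (K - 1 - k)"
  unfolding zlev_def wb_def by simp

lemma zprod_wb: assumes "S \<subseteq> {..<K}"
  shows "zprod K S q = (\<Prod>m\<in>(\<lambda>k. K - 1 - k) ` S. wb q m)"
proof -
  have inj: "inj_on (\<lambda>k. K - 1 - k) S"
  proof (rule inj_onI)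
    fix x y assume "x \<in> S" "y \<in> S" "K - 1 - x = K - 1 - y"
    moreover have "x < K" "y < K" using assms \<open>x \<in> S\<close> \<open>y \<in> S\<close> by auto
    ultimately show "x = y" by arith
  qed
  have "zprod K S q = (\<Prod>k\<in>S. wb q (K - 1 - k))"
    unfolding zprod_def by (rule prod.cong) (use assms zlev_wb in auto)
  also have "\<dots> = (\<Prod>m\<in>(\<lambda>k. K - 1 - k) ` S. wb q m)"
    by (rule prod.reindex[OF inj, symmetric, unfolded comp_def])
  finally show ?thesis .
qed

lemma zprod_empty[simp]: "zprod K {} q = 1" unfolding zprod_def by simp

lemma zprod_ortho:
  assumes S: "S \<subseteq> {..<K}" and T: "T \<subseteq> {..<K}"
  shows "(\<Sum>q<2^K. zprod K S q * zprod K T q) = (if S = T then 2^K else 0)"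
proof -
  let ?r = "\<lambda>k. K - 1 - k"
  have inj: "inj_on ?r {..<K}"
  proof (rule inj_onI)
    fix x y assume "x \<in> {..<K}" "y \<in> {..<K}" "K - 1 - x = K - 1 - y"
    thus "x = y" by auto
  qed
  have s: "?r ` S \<subseteq> {..<K}" "?r ` T \<subseteq> {..<K}" using S T by auto
  have eq: "?r ` S = ?r ` T \<longleftrightarrow> S = T"
    using inj_on_image_eq_iff[OF inj S T] .
  show ?thesis unfolding zprod_wb[OF S] zprod_wb[OF T] walsh2[OF s] eq ..
qed

lemma zprod_complete:
  assumes "q < 2^K" "q' < 2^K"
  shows "(\<Sum>S\<in>Pow {..<K}. zprod K S q * zprod K S q') = (if q = q' then 2^K else 0)"
proof -
  have "(\<Sum>S\<in>Pow {..<K}. zprod K S q * zprod K S q')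
      = (\<Sum>S\<in>Pow {..<K}. (\<Prod>k\<in>S. zlev K q k * zlev K q' k) * (\<Prod>k\<in>{..<K}-S. 1))"
    unfolding zprod_def by (simp add: prod.distrib)
  also have "\<dots> = (\<Prod>k<K. zlev K q k * zlev K q' k + 1)" by (rule prod_add[symmetric]) simp
  also have "\<dots> = (if q = q' then 2^K else 0)"
  proof (cases "q = q'")
    case True
    have "(\<Prod>k<K. zlev K q k * zlev K q' k + 1) = (\<Prod>k<K. 2::real)"
      by (rule prod.cong) (auto simp: True zlev_def)
    thus ?thesis using True by simp
  next
    case False
    then obtain m where m: "m < K" "bit q m \<noteq> bit q' m" using bits_differ assms by blast
    define k where "k = K - 1 - m"
    have k: "k < K" "K - 1 - k = m" unfolding k_def using m by auto
    hence "zlev K q k * zlev K q' k + 1 = 0" using m by (auto simp: zlev_def)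
    hence "(\<Prod>k<K. zlev K q k * zlev K q' k + 1) = 0" using k
      by (metis finite_lessThan lessThan_iff prod_zero_iff)
    thus ?thesis using False by simp
  qed
  finally show ?thesis .
qed

lemma set_subsets_list: "set (subsets_list K) = Pow {..<K}" and distinct_subsets_list: "distinct (subsets_list K)"
proof -
  let ?f = "\<lambda>m::nat. {k. k < K \<and> bit m k}"
  have inj: "inj_on ?f {0..<2^K}"
  proof (rule inj_onI)
    fix a b assume a: "a \<in> {0..<(2::nat)^K}" and b: "b \<in> {0..<(2::nat)^K}" and e: "?f a = ?f b"
    show "a = b"
    proof (rule ccontr)
      assume ab: "a \<noteq> b"
      have "a < 2^K" "b < 2^K" using a b by auto
      then obtain m where "m < K" "bit a m \<noteq> bit b m" using bits_differ ab by blast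
      thus False using e by blast
    qed
  qed
  have sub: "?f ` {0..<2^K} \<subseteq> Pow {..<K}" by auto
  have card: "card (?f ` {0..<2^K}) = card (Pow {..<K::nat})"
    using card_image[OF inj] by (simp add: card_Pow)
  have "?f ` {0..<2^K} = Pow {..<K}"
    by (rule card_subset_eq[OF _ sub card]) simp
  thus "set (subsets_list K) = Pow {..<K}" unfolding subsets_list_def by simp
  show "distinct (subsets_list K)" unfolding subsets_list_def
    using inj by (simp add: distinct_map)
qed

lemma set_Fminus: "set (Fminus K Fp) = {S \<in> Pow {..<K}. S \<noteq> {} \<and> S \<notin> set Fp}"
  and distinct_Fminus: "distinct (Fminus K Fp)"
  unfolding Fminus_def PK_def PK'_def using set_subsets_list distinct_subsets_list by auto

lemma set_Fminus': "set (Fminus' K Fp') = {S \<in> Pow {..<K}. S \<notin> set Fp'}"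
  and distinct_Fminus': "distinct (Fminus' K Fp')"
  unfolding Fminus'_def PK'_def using set_subsets_list distinct_subsets_list by auto


definition WM :: "nat \<Rightarrow> nat set list \<Rightarrow> real mat" where
  "WM K L = mat (2^K) (length L) (\<lambda>(c,a). zprod K (L!a) c)"

lemma WM_carrier[simp]: "WM K L \<in> carrier_mat (2^K) (length L)"
  "dim_row (WM K L) = 2^K" "dim_col (WM K L) = length L"
  unfolding WM_def by auto

lemma WM_index[simp]: "c < 2^K \<Longrightarrow> a < length L \<Longrightarrow> WM K L $$ (c,a) = zprod K (L!a) c"
  unfolding WM_def by simp

lemma WM_gram:
  assumes "set L \<subseteq> Pow {..<K}" "set L' \<subseteq> Pow {..<K}"
  shows "transpose_mat (WM K L) * WM K L' = mat (length L) (length L') (\<lambda>(a,b). if L!a = L'!b then 2^K else 0)"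
proof (rule eq_matI)
  fix a b assume a: "a < dim_row (mat (length L) (length L') (\<lambda>(a,b). if L!a = L'!b then (2::real)^K else 0))"
    and b: "b < dim_col (mat (length L) (length L') (\<lambda>(a,b). if L!a = L'!b then (2::real)^K else 0))"
  hence a': "a < length L" and b': "b < length L'" by auto
  have s: "L!a \<subseteq> {..<K}" "L'!b \<subseteq> {..<K}" using assms a' b' nth_mem by blast+
  have "(transpose_mat (WM K L) * WM K L') $$ (a,b) = (\<Sum>k<2^K. transpose_mat (WM K L) $$ (a,k) * WM K L' $$ (k,b))"
    using mult_index_sum[of a "transpose_mat (WM K L)" b "WM K L'"] a' b' by simp
  also have "\<dots> = (\<Sum>k<2^K. zprod K (L!a) k * zprod K (L'!b) k)"
    by (rule sum.cong) (use a' b' in auto)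
  also have "\<dots> = (if L!a = L'!b then 2^K else 0)" by (rule zprod_ortho[OF s])
  finally show "(transpose_mat (WM K L) * WM K L') $$ (a,b) = mat (length L) (length L') (\<lambda>(a,b). if L!a = L'!b then 2^K else 0) $$ (a,b)"
    using a' b' by simp
qed auto

lemma WM_gram_id:
  assumes "set L \<subseteq> Pow {..<K}" "distinct L"
  shows "transpose_mat (WM K L) * WM K L = (2^K) \<cdot>\<^sub>m 1\<^sub>m (length L)"
  unfolding WM_gram[OF assms(1) assms(1)]
  by (rule eq_matI) (use assms(2) in \<open>auto simp: nth_eq_iff_index_eq\<close>)

lemma WM_gram_0:
  assumes "set L \<subseteq> Pow {..<K}" "set L' \<subseteq> Pow {..<K}" "set L \<inter> set L' = {}"
  shows "transpose_mat (WM K L) * WM K L' = 0\<^sub>m (length L) (length L')"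
  unfolding WM_gram[OF assms(1,2)]
  by (rule eq_matI) (use assms(3) in \<open>auto dest: nth_mem\<close>)

lemma sum_nth_distinct: "distinct L \<Longrightarrow> (\<Sum>a<length L. f (L!a)) = (\<Sum>S\<in>set L. (f S :: real))"
  using sum.reindex_bij_betw[OF bij_betw_nth[of L "{..<length L}" "set L"], of f] by simp

lemma WM_outer:
  assumes "distinct L"
  shows "WM K L * transpose_mat (WM K L) = mat (2^K) (2^K) (\<lambda>(c,c'). \<Sum>S\<in>set L. zprod K S c * zprod K S c')"
proof (rule eq_matI)
  fix c c' assume "c < dim_row (mat (2^K) (2^K) (\<lambda>(c,c'). \<Sum>S\<in>set L. zprod K S c * zprod K S c'))"
    "c' < dim_col (mat (2^K) (2^K) (\<lambda>(c,c'). \<Sum>S\<in>set L. zprod K S c * zprod K S c'))"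
  hence c: "c < 2^K" "c' < 2^K" by auto
  have "(WM K L * transpose_mat (WM K L)) $$ (c,c') = (\<Sum>a<length L. WM K L $$ (c,a) * transpose_mat (WM K L) $$ (a,c'))"
    using mult_index_sum[of c "WM K L" c' "transpose_mat (WM K L)"] c by simp
  also have "\<dots> = (\<Sum>a<length L. zprod K (L!a) c * zprod K (L!a) c')"
    by (rule sum.cong) (use c in auto)
  also have "\<dots> = (\<Sum>S\<in>set L. zprod K S c * zprod K S c')"
    by (rule sum_nth_distinct[OF assms])
  finally show "(WM K L * transpose_mat (WM K L)) $$ (c,c') = mat (2^K) (2^K) (\<lambda>(c,c'). \<Sum>S\<in>set L. zprod K S c * zprod K S c') $$ (c,c')"
    using c by simp
qed auto

lemma WM_complete:
  assumes "distinct L1" "distinct L2" "set L1 \<inter> set L2 = {}" "set L1 \<union> set L2 = Pow {..<K}"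
  shows "WM K L1 * transpose_mat (WM K L1) + WM K L2 * transpose_mat (WM K L2) = (2^K) \<cdot>\<^sub>m 1\<^sub>m (2^K)"
  unfolding WM_outer[OF assms(1)] WM_outer[OF assms(2)]
proof (rule eq_matI)
  fix c c' assume "c < dim_row ((2::real)^K \<cdot>\<^sub>m 1\<^sub>m (2^K))" "c' < dim_col ((2::real)^K \<cdot>\<^sub>m 1\<^sub>m (2^K))"
  hence c: "c < 2^K" "c' < 2^K" by auto
  have "(\<Sum>S\<in>set L1. zprod K S c * zprod K S c') + (\<Sum>S\<in>set L2. zprod K S c * zprod K S c')
      = (\<Sum>S\<in>set L1 \<union> set L2. zprod K S c * zprod K S c')"
    by (rule sum.union_disjoint[symmetric]) (use assms(3) in auto)
  also have "\<dots> = (if c = c' then 2^K else 0)" unfolding assms(4) by (rule zprod_complete[OF c])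
  finally show "(mat (2^K) (2^K) (\<lambda>(c,c'). \<Sum>S\<in>set L1. zprod K S c * zprod K S c') + mat (2^K) (2^K) (\<lambda>(c,c'). \<Sum>S\<in>set L2. zprod K S c * zprod K S c')) $$ (c,c')
     = ((2::real)^K \<cdot>\<^sub>m 1\<^sub>m (2^K)) $$ (c,c')" using c by simp
qed auto

lemma Cmat_WM: "Cmat K L = (1 / 2^(K-1)) \<cdot>\<^sub>m transpose_mat (WM K L)"
  by (rule eq_matI) (auto simp: Cmat_def cvec_def mat_of_rows_index)


lemma tr_smult: "transpose_mat (a \<cdot>\<^sub>m A) = a \<cdot>\<^sub>m transpose_mat (A::real mat)"
  by (rule eq_matI) auto
lemma smult_smult_mat: "a \<cdot>\<^sub>m (b \<cdot>\<^sub>m A) = (a * b) \<cdot>\<^sub>m (A::real mat)"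
  by (rule eq_matI) auto
lemma smult_one_mat1: "1 \<cdot>\<^sub>m A = (A::real mat)"
  by (rule eq_matI) auto

lemma BD_mult:
  assumes "(A1::real mat) \<in> carrier_mat a b" "D1 \<in> carrier_mat c d" "A2 \<in> carrier_mat b e" "D2 \<in> carrier_mat d f"
  shows "four_block_mat A1 (0\<^sub>m a d) (0\<^sub>m c b) D1 * four_block_mat A2 (0\<^sub>m b f) (0\<^sub>m d e) D2
       = four_block_mat (A1 * A2) (0\<^sub>m a f) (0\<^sub>m c e) (D1 * D2)"
proof -
  have "four_block_mat A1 (0\<^sub>m a d) (0\<^sub>m c b) D1 * four_block_mat A2 (0\<^sub>m b f) (0\<^sub>m d e) D2
     = four_block_mat (A1 * A2 + 0\<^sub>m a d * 0\<^sub>m d e) (A1 * 0\<^sub>m b f + 0\<^sub>m a d * D2)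
         (0\<^sub>m c b * A2 + D1 * 0\<^sub>m d e) (0\<^sub>m c b * 0\<^sub>m b f + D1 * D2)"
    by (rule mult_four_block_mat) (use assms in auto)
  also have "\<dots> = four_block_mat (A1 * A2) (0\<^sub>m a f) (0\<^sub>m c e) (D1 * D2)"
  proof (rule cong_four_block_mat)
    have z1: "0\<^sub>m a d * 0\<^sub>m d e = (0\<^sub>m a e :: real mat)" "0\<^sub>m c b * 0\<^sub>m b f = (0\<^sub>m c f :: real mat)"
      by (rule left_mult_zero_mat, simp)+
    have z2: "A1 * 0\<^sub>m b f = 0\<^sub>m a f" "0\<^sub>m a d * D2 = 0\<^sub>m a f" "0\<^sub>m c b * A2 = 0\<^sub>m c e" "D1 * 0\<^sub>m d e = 0\<^sub>m c e"
      using assms by (auto intro: left_mult_zero_mat right_mult_zero_mat)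
    have c: "A1 * A2 \<in> carrier_mat a e" "D1 * D2 \<in> carrier_mat c f" using assms by auto
    show "A1 * A2 + 0\<^sub>m a d * 0\<^sub>m d e = A1 * A2" unfolding z1 using c by simp
    show "0\<^sub>m c b * 0\<^sub>m b f + D1 * D2 = D1 * D2" unfolding z1 using c by simp
    show "A1 * 0\<^sub>m b f + 0\<^sub>m a d * D2 = 0\<^sub>m a f" unfolding z2 by simp
    show "0\<^sub>m c b * A2 + D1 * 0\<^sub>m d e = 0\<^sub>m c e" unfolding z2 by simp
  qed
  finally show ?thesis .
qed

lemma BD_transpose:
  assumes "(A::real mat) \<in> carrier_mat a b" "D \<in> carrier_mat c d"
  shows "transpose_mat (four_block_mat A (0\<^sub>m a d) (0\<^sub>m c b) D)
       = four_block_mat (transpose_mat A) (0\<^sub>m b c) (0\<^sub>m d a) (transpose_mat D)"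
  using transpose_four_block_mat[OF assms(1) _ _ assms(2), of "0\<^sub>m a d" "0\<^sub>m c b"] by simp

lemma BD_add:
  assumes "(A1::real mat) \<in> carrier_mat a b" "D1 \<in> carrier_mat c d" "A2 \<in> carrier_mat a b" "D2 \<in> carrier_mat c d"
  shows "four_block_mat A1 (0\<^sub>m a d) (0\<^sub>m c b) D1 + four_block_mat A2 (0\<^sub>m a d) (0\<^sub>m c b) D2
       = four_block_mat (A1 + A2) (0\<^sub>m a d) (0\<^sub>m c b) (D1 + D2)"
  using add_four_block_mat[OF assms(1) _ _ assms(2) assms(3) _ _ assms(4), of "0\<^sub>m a d" "0\<^sub>m c b" "0\<^sub>m a d" "0\<^sub>m c b"]
  by simp

lemma BD_smult:
  assumes "(A::real mat) \<in> carrier_mat a b" "D \<in> carrier_mat c d"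
  shows "k \<cdot>\<^sub>m four_block_mat A (0\<^sub>m a d) (0\<^sub>m c b) D = four_block_mat (k \<cdot>\<^sub>m A) (0\<^sub>m a d) (0\<^sub>m c b) (k \<cdot>\<^sub>m D)"
  using smult_four_block_mat[OF assms(1) _ _ assms(2), of "0\<^sub>m a d" "0\<^sub>m c b" k] by simp

lemma BD_zero: "four_block_mat (0\<^sub>m a b) (0\<^sub>m a d) (0\<^sub>m c b) (0\<^sub>m c d) = (0\<^sub>m (a + c) (b + d) :: real mat)"
  by simp

lemma BD_one_smult: "four_block_mat (k \<cdot>\<^sub>m 1\<^sub>m a) (0\<^sub>m a c) (0\<^sub>m c a) (k \<cdot>\<^sub>m 1\<^sub>m c) = k \<cdot>\<^sub>m (1\<^sub>m (a + c) :: real mat)"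
  using BD_smult[of "1\<^sub>m a" a a "1\<^sub>m c" c c k] by simp


locale conc =
  fixes K J N :: nat and lev :: "nat \<Rightarrow> nat" and x :: "nat \<Rightarrow> real vec" and Y :: "real vec"
    and Fp Fp' :: "nat set list"
  assumes lev: "\<forall>i<N. lev i < 2^K"
    and xdim: "\<forall>i<N. x i \<in> carrier_vec J"
    and Ydim: "Y \<in> carrier_vec N"
    and Fp_ne: "Fp \<noteq> []"
    and Fp_sub: "set Fp \<subseteq> PK K"
    and Fp_dist: "distinct Fp"
    and Fp'_sub: "set Fp' \<subseteq> PK' K"
    and Fp'_dist: "distinct Fp'"
    and nonsing: "invertible_mat (transpose_mat (chiL K J N lev x) * chiL K J N lev x)"
begin

abbreviation "Q \<equiv> (2::nat)^K"
definition "LY = {} # Fp"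
abbreviation "nF \<equiv> length Fp"
abbreviation "nG \<equiv> length Fp'"
abbreviation "LM \<equiv> Fminus K Fp"
abbreviation "LM' \<equiv> Fminus' K Fp'"
abbreviation "fm \<equiv> length LM"
abbreviation "fm' \<equiv> length LM'"
definition "BY = WM K LY"
definition "ZG = WM K Fp'"
definition "BG = mkron ZG (1\<^sub>m J)"
definition "Bm = four_block_mat BY (0\<^sub>m Q (nG * J)) (0\<^sub>m (Q * J) (1 + nF)) BG"
definition "CM = Cmat K LM"
definition "CM' = Cmat K LM'"
definition "MK = mkron CM' (1\<^sub>m J)"
abbreviation "Rm \<equiv> Rmat K J Fp Fp'"
abbreviation "n \<equiv> Q + Q * J"
abbreviation "p \<equiv> (1 + nF) + nG * J"
abbreviation "m \<equiv> fm + fm' * J"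
definition "s = (1 / 2^(K-1) :: real)"
definition "\<beta> = s * s * 2^K"

lemma Rm_eq: "Rm = four_block_mat CM (0\<^sub>m fm (Q * J)) (0\<^sub>m (fm' * J) Q) MK"
  unfolding Rmat_def Let_def CM_def MK_def CM'_def by (simp add: mult.commute)

lemma K_pos: "K > 0"
proof -
  obtain S where "S \<in> set Fp" using Fp_ne by (cases Fp) auto
  hence "S \<subseteq> {..<K}" "S \<noteq> {}" using Fp_sub unfolding PK_def PK'_def by auto
  thus ?thesis by (cases K) auto
qed

lemma sets:
  "set LY \<subseteq> Pow {..<K}" "distinct LY" "set Fp' \<subseteq> Pow {..<K}"
  "set LM \<subseteq> Pow {..<K}" "distinct LM" "set LM' \<subseteq> Pow {..<K}" "distinct LM'"
  "set LY \<inter> set LM = {}" "set LY \<union> set LM = Pow {..<K}"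
  "set LM \<inter> set LY = {}"
  "set Fp' \<inter> set LM' = {}" "set Fp' \<union> set LM' = Pow {..<K}" "set LM' \<inter> set Fp' = {}"
  using Fp_sub Fp'_sub Fp_dist unfolding LY_def set_Fminus set_Fminus' PK_def PK'_def
  by (auto simp: distinct_Fminus distinct_Fminus')

lemma BY: "BY \<in> carrier_mat Q (1 + nF)" unfolding BY_def using WM_carrier(1)[of K LY] by (simp add: LY_def)
lemma ZG: "ZG \<in> carrier_mat Q nG" unfolding ZG_def by simp
lemma BG: "BG \<in> carrier_mat (Q * J) (nG * J)" unfolding BG_def using ZG by auto
lemma Bm: "Bm \<in> carrier_mat n p" unfolding Bm_def by (rule four_block_carrier_mat[OF BY BG])
lemma CM: "CM \<in> carrier_mat fm Q" unfolding CM_def Cmat_def using mat_of_rows_carrier(1)[of Q "map (cvec K) LM"] by simp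
lemma CM': "CM' \<in> carrier_mat fm' Q" unfolding CM'_def Cmat_def using mat_of_rows_carrier(1)[of Q "map (cvec K) LM'"] by simp
lemma MK: "MK \<in> carrier_mat (fm' * J) (Q * J)" unfolding MK_def using CM' by auto
lemma Rm: "Rm \<in> carrier_mat m n" unfolding Rm_eq using CM MK by simp

lemma CM_WM: "CM = s \<cdot>\<^sub>m transpose_mat (WM K LM)" unfolding CM_def s_def Cmat_WM ..
lemma CM'_WM: "CM' = s \<cdot>\<^sub>m transpose_mat (WM K LM')" unfolding CM'_def s_def Cmat_WM ..

lemma G1: "transpose_mat Bm * Bm = real Q \<cdot>\<^sub>m 1\<^sub>m p"
proof -
  have "transpose_mat Bm * Bm = four_block_mat (transpose_mat BY) (0\<^sub>m (1 + nF) (Q * J)) (0\<^sub>m (nG * J) Q) (transpose_mat BG) * Bm"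
    unfolding Bm_def using BD_transpose[OF BY BG] by simp
  also have "\<dots> = four_block_mat (transpose_mat BY * BY) (0\<^sub>m (1 + nF) (nG * J)) (0\<^sub>m (nG * J) (1 + nF)) (transpose_mat BG * BG)"
    unfolding Bm_def by (rule BD_mult) (use BY BG in auto)
  also have "transpose_mat BY * BY = real Q \<cdot>\<^sub>m 1\<^sub>m (1 + nF)"
    unfolding BY_def using WM_gram_id[OF sets(1,2)] by (simp add: LY_def)
  also have "transpose_mat BG * BG = real Q \<cdot>\<^sub>m 1\<^sub>m (nG * J)"
  proof -
    have "transpose_mat BG * BG = mkron (transpose_mat ZG * ZG) (1\<^sub>m J * 1\<^sub>m J)"
      unfolding BG_def mkron_transpose transpose_one by (rule mkron_mult) (use ZG in auto)
    also have "transpose_mat ZG * ZG = real Q \<cdot>\<^sub>m 1\<^sub>m nG"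
      unfolding ZG_def using WM_gram_id[OF sets(3) Fp'_dist] by simp
    finally show ?thesis by (simp add: mkron_smult mkron_one)
  qed
  finally show ?thesis using BD_one_smult by simp
qed

lemma s_pos: "s > 0" unfolding s_def by simp
lemma beta_pos: "\<beta> > 0" unfolding \<beta>_def using s_pos by simp
lemma beta_ss: "(1 / \<beta>) * (s * s) = 1 / real Q" unfolding \<beta>_def using s_pos by simp

lemma G3: "Rm * Bm = 0\<^sub>m m p"
proof -
  have "Rm * Bm = four_block_mat (CM * BY) (0\<^sub>m fm (nG * J)) (0\<^sub>m (fm' * J) (1 + nF)) (MK * BG)"
    unfolding Rm_eq Bm_def by (rule BD_mult[OF CM MK BY BG])
  also have "CM * BY = 0\<^sub>m fm (1 + nF)"
  proof -
    have "CM * BY = s \<cdot>\<^sub>m (transpose_mat (WM K LM) * WM K LY)"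
      unfolding CM_WM BY_def by (rule mult_smult_assoc_mat) auto
    also have "transpose_mat (WM K LM) * WM K LY = 0\<^sub>m fm (length LY)"
      by (rule WM_gram_0[OF sets(4,1,10)])
    finally show ?thesis by (simp add: LY_def)
  qed
  also have "MK * BG = 0\<^sub>m (fm' * J) (nG * J)"
  proof -
    have "MK * BG = mkron (CM' * ZG) (1\<^sub>m J * 1\<^sub>m J)"
      unfolding MK_def BG_def by (rule mkron_mult) (use CM' ZG in auto)
    also have "CM' * ZG = s \<cdot>\<^sub>m (transpose_mat (WM K LM') * WM K Fp')"
      unfolding CM'_WM ZG_def by (rule mult_smult_assoc_mat) auto
    also have "transpose_mat (WM K LM') * WM K Fp' = 0\<^sub>m fm' nG"
      by (rule WM_gram_0[OF sets(6,3,13)])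
    finally show ?thesis by (simp add: mkron_zero)
  qed
  finally show ?thesis by simp
qed

lemma G2: "Rm * transpose_mat Rm = \<beta> \<cdot>\<^sub>m 1\<^sub>m m"
proof -
  have "Rm * transpose_mat Rm = Rm * four_block_mat (transpose_mat CM) (0\<^sub>m Q (fm' * J)) (0\<^sub>m (Q * J) fm) (transpose_mat MK)"
    unfolding Rm_eq using BD_transpose[OF CM MK] by simp
  also have "\<dots> = four_block_mat (CM * transpose_mat CM) (0\<^sub>m fm (fm' * J)) (0\<^sub>m (fm' * J) fm) (MK * transpose_mat MK)"
    unfolding Rm_eq by (rule BD_mult) (use CM MK in auto)
  also have "CM * transpose_mat CM = \<beta> \<cdot>\<^sub>m 1\<^sub>m fm"
  proof -
    have "CM * transpose_mat CM = s \<cdot>\<^sub>m (transpose_mat (WM K LM) * (s \<cdot>\<^sub>m WM K LM))"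
      unfolding CM_WM tr_smult transpose_transpose by (rule mult_smult_assoc_mat) auto
    also have "transpose_mat (WM K LM) * (s \<cdot>\<^sub>m WM K LM) = s \<cdot>\<^sub>m (transpose_mat (WM K LM) * WM K LM)"
      by (rule mult_smult_distrib) auto
    also have "transpose_mat (WM K LM) * WM K LM = real Q \<cdot>\<^sub>m 1\<^sub>m fm"
      using WM_gram_id[OF sets(4,5)] by simp
    finally show ?thesis unfolding \<beta>_def smult_smult_mat by (simp add: mult.assoc)
  qed
  also have "MK * transpose_mat MK = \<beta> \<cdot>\<^sub>m 1\<^sub>m (fm' * J)"
  proof -
    have "MK * transpose_mat MK = mkron (CM' * transpose_mat CM') (1\<^sub>m J * 1\<^sub>m J)"
      unfolding MK_def mkron_transpose transpose_one by (rule mkron_mult) (use CM' in auto)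
    also have "CM' * transpose_mat CM' = \<beta> \<cdot>\<^sub>m 1\<^sub>m fm'"
    proof -
      have "CM' * transpose_mat CM' = s \<cdot>\<^sub>m (transpose_mat (WM K LM') * (s \<cdot>\<^sub>m WM K LM'))"
        unfolding CM'_WM tr_smult transpose_transpose by (rule mult_smult_assoc_mat) auto
      also have "transpose_mat (WM K LM') * (s \<cdot>\<^sub>m WM K LM') = s \<cdot>\<^sub>m (transpose_mat (WM K LM') * WM K LM')"
        by (rule mult_smult_distrib) auto
      also have "transpose_mat (WM K LM') * WM K LM' = real Q \<cdot>\<^sub>m 1\<^sub>m fm'"
        using WM_gram_id[OF sets(6,7)] by simp
      finally show ?thesis unfolding \<beta>_def smult_smult_mat by (simp add: mult.assoc)
    qed
    finally show ?thesis by (simp add: mkron_smult mkron_one)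
  qed
  finally show ?thesis using BD_one_smult by simp
qed

lemma scal_block:
  assumes X1: "X1 \<in> carrier_mat Q Q" and X2: "X2 \<in> carrier_mat Q Q" and e: "X1 + X2 = real Q \<cdot>\<^sub>m 1\<^sub>m Q"
  shows "(1 / real Q) \<cdot>\<^sub>m X1 + (1 / \<beta>) \<cdot>\<^sub>m ((s * s) \<cdot>\<^sub>m X2) = 1\<^sub>m Q"
proof (rule eq_matI)
  fix i j assume "i < dim_row (1\<^sub>m Q :: real mat)" "j < dim_col (1\<^sub>m Q :: real mat)"
  hence ij: "i < Q" "j < Q" by auto
  have "(X1 + X2) $$ (i,j) = (real Q \<cdot>\<^sub>m 1\<^sub>m Q) $$ (i,j)" using e by simp
  hence h: "X1 $$ (i,j) + X2 $$ (i,j) = (if i = j then real Q else 0)" using ij X1 X2 by simp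
  have "((1 / real Q) \<cdot>\<^sub>m X1 + (1 / \<beta>) \<cdot>\<^sub>m ((s * s) \<cdot>\<^sub>m X2)) $$ (i,j)
      = (1 / real Q) * X1 $$ (i,j) + ((1 / \<beta>) * (s * s)) * X2 $$ (i,j)" using ij X1 X2 by simp
  also have "\<dots> = (1 / real Q) * (X1 $$ (i,j) + X2 $$ (i,j))" unfolding beta_ss by (simp add: algebra_simps)
  also have "\<dots> = 1\<^sub>m Q $$ (i,j)" unfolding h using ij by simp
  finally show "((1 / real Q) \<cdot>\<^sub>m X1 + (1 / \<beta>) \<cdot>\<^sub>m ((s * s) \<cdot>\<^sub>m X2)) $$ (i,j) = 1\<^sub>m Q $$ (i,j)" .
qed (use X1 X2 in auto)

lemma G4: "(1 / real Q) \<cdot>\<^sub>m (Bm * transpose_mat Bm) + (1 / \<beta>) \<cdot>\<^sub>m (transpose_mat Rm * Rm) = 1\<^sub>m n"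
proof -
  have BB: "Bm * transpose_mat Bm = four_block_mat (BY * transpose_mat BY) (0\<^sub>m Q (Q * J)) (0\<^sub>m (Q * J) Q) (BG * transpose_mat BG)"
    unfolding Bm_def BD_transpose[OF BY BG] by (rule BD_mult) (use BY BG in auto)
  have RR: "transpose_mat Rm * Rm = four_block_mat (transpose_mat CM * CM) (0\<^sub>m Q (Q * J)) (0\<^sub>m (Q * J) Q) (transpose_mat MK * MK)"
    unfolding Rm_eq BD_transpose[OF CM MK] by (rule BD_mult) (use CM MK in auto)
  have c1: "BY * transpose_mat BY \<in> carrier_mat Q Q" "BG * transpose_mat BG \<in> carrier_mat (Q * J) (Q * J)"
    "transpose_mat CM * CM \<in> carrier_mat Q Q" "transpose_mat MK * MK \<in> carrier_mat (Q * J) (Q * J)"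
    using BY BG CM MK by auto
  have "(1 / real Q) \<cdot>\<^sub>m (Bm * transpose_mat Bm) + (1 / \<beta>) \<cdot>\<^sub>m (transpose_mat Rm * Rm)
    = four_block_mat ((1 / real Q) \<cdot>\<^sub>m (BY * transpose_mat BY) + (1 / \<beta>) \<cdot>\<^sub>m (transpose_mat CM * CM)) (0\<^sub>m Q (Q * J)) (0\<^sub>m (Q * J) Q)
        ((1 / real Q) \<cdot>\<^sub>m (BG * transpose_mat BG) + (1 / \<beta>) \<cdot>\<^sub>m (transpose_mat MK * MK))"
    unfolding BB RR BD_smult[OF c1(1,2)] BD_smult[OF c1(3,4)]
    by (rule BD_add) (use c1 in auto)
  also have "(1 / real Q) \<cdot>\<^sub>m (BY * transpose_mat BY) + (1 / \<beta>) \<cdot>\<^sub>m (transpose_mat CM * CM) = 1\<^sub>m Q"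
  proof -
    have "transpose_mat CM * CM = (s * s) \<cdot>\<^sub>m (WM K LM * transpose_mat (WM K LM))"
    proof -
      have "transpose_mat CM * CM = s \<cdot>\<^sub>m (WM K LM * (s \<cdot>\<^sub>m transpose_mat (WM K LM)))"
        unfolding CM_WM tr_smult transpose_transpose by (rule mult_smult_assoc_mat) auto
      also have "WM K LM * (s \<cdot>\<^sub>m transpose_mat (WM K LM)) = s \<cdot>\<^sub>m (WM K LM * transpose_mat (WM K LM))"
        by (rule mult_smult_distrib) auto
      finally show ?thesis unfolding smult_smult_mat .
    qed
    moreover have "BY * transpose_mat BY + WM K LM * transpose_mat (WM K LM) = real Q \<cdot>\<^sub>m 1\<^sub>m Q"
      unfolding BY_def using WM_complete[OF sets(2,5,8,9)] by simp
    moreover have "WM K LM * transpose_mat (WM K LM) \<in> carrier_mat Q Q"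
      using mult_carrier_mat[OF WM_carrier(1)[of K LM] transpose_carrier_mat[THEN iffD2, OF WM_carrier(1)[of K LM]]] .
    ultimately show ?thesis using scal_block[OF c1(1), of "WM K LM * transpose_mat (WM K LM)"] by simp
  qed
  also have "(1 / real Q) \<cdot>\<^sub>m (BG * transpose_mat BG) + (1 / \<beta>) \<cdot>\<^sub>m (transpose_mat MK * MK) = 1\<^sub>m (Q * J)"
  proof -
    have ZZ: "ZG * transpose_mat ZG \<in> carrier_mat Q Q" using ZG by simp
    have "BG * transpose_mat BG = mkron (ZG * transpose_mat ZG) (1\<^sub>m J * 1\<^sub>m J)"
      unfolding BG_def mkron_transpose transpose_one by (rule mkron_mult) (use ZG in auto)
    moreover have "transpose_mat MK * MK = mkron (transpose_mat CM' * CM') (1\<^sub>m J * 1\<^sub>m J)"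
      unfolding MK_def mkron_transpose transpose_one by (rule mkron_mult) (use CM' in auto)
    moreover have "transpose_mat CM' * CM' = (s * s) \<cdot>\<^sub>m (WM K LM' * transpose_mat (WM K LM'))"
    proof -
      have "transpose_mat CM' * CM' = s \<cdot>\<^sub>m (WM K LM' * (s \<cdot>\<^sub>m transpose_mat (WM K LM')))"
        unfolding CM'_WM tr_smult transpose_transpose by (rule mult_smult_assoc_mat) auto
      also have "WM K LM' * (s \<cdot>\<^sub>m transpose_mat (WM K LM')) = s \<cdot>\<^sub>m (WM K LM' * transpose_mat (WM K LM'))"
        by (rule mult_smult_distrib) auto
      finally show ?thesis unfolding smult_smult_mat .
    qed
    moreover have "ZG * transpose_mat ZG + WM K LM' * transpose_mat (WM K LM') = real Q \<cdot>\<^sub>m 1\<^sub>m Q"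
      unfolding ZG_def using WM_complete[OF Fp'_dist sets(7,11,12)] by simp
    moreover have "WM K LM' * transpose_mat (WM K LM') \<in> carrier_mat Q Q"
      using mult_carrier_mat[OF WM_carrier(1)[of K LM'] transpose_carrier_mat[THEN iffD2, OF WM_carrier(1)[of K LM']]] .
    ultimately have inner: "(1 / real Q) \<cdot>\<^sub>m (ZG * transpose_mat ZG) + (1 / \<beta>) \<cdot>\<^sub>m (transpose_mat CM' * CM') = 1\<^sub>m Q"
      using scal_block[OF ZZ, of "WM K LM' * transpose_mat (WM K LM')"] by simp
    have "(1 / real Q) \<cdot>\<^sub>m (BG * transpose_mat BG) + (1 / \<beta>) \<cdot>\<^sub>m (transpose_mat MK * MK)
        = mkron ((1 / real Q) \<cdot>\<^sub>m (ZG * transpose_mat ZG) + (1 / \<beta>) \<cdot>\<^sub>m (transpose_mat CM' * CM')) (1\<^sub>m J)"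
      unfolding \<open>BG * transpose_mat BG = _\<close> \<open>transpose_mat MK * MK = _\<close>
      by (subst mkron_add) (use ZG CM' in \<open>auto simp: mkron_smult\<close>)
    also have "\<dots> = 1\<^sub>m (Q * J)" unfolding inner mkron_one ..
    finally show ?thesis .
  qed
  finally show ?thesis by simp
qed

end


lemma nth_concat_uniform:
  "(\<forall>y\<in>set ys. length (f y) = J) \<Longrightarrow> k < length ys * J \<Longrightarrow> concat (map f ys) ! k = f (ys ! (k div J)) ! (k mod J)"
proof (induction ys arbitrary: k)
  case Nil thus ?case by simp
next
  case (Cons y ys)
  have ly: "length (f y) = J" using Cons.prems by simp
  show ?case
  proof (cases "k < J")
    case True
    thus ?thesis using ly by (simp add: nth_append)
  next
    case False
    have k': "k - J < length ys * J" using Cons.prems(2) False by simp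
    have "concat (map f (y # ys)) ! k = concat (map f ys) ! (k - J)"
      using False ly by (simp add: nth_append)
    also have "\<dots> = f (ys ! ((k - J) div J)) ! ((k - J) mod J)"
      using Cons.IH[OF _ k'] Cons.prems(1) by simp
    also have "(k - J) mod J = k mod J" using False by (simp add: le_mod_geq)
    also have "ys ! ((k - J) div J) = (y # ys) ! (k div J)"
    proof -
      have "J > 0" using False Cons.prems(2) by (cases J) auto
      hence "k div J = Suc ((k - J) div J)" using False by (simp add: le_div_geq)
      thus ?thesis by simp
    qed
    finally show ?thesis .
  qed
qed

lemma length_concat_uniform:
  "(\<forall>y\<in>set ys. length (f y) = J) \<Longrightarrow> length (concat (map f ys)) = length ys * J"
  by (induction ys) auto

lemma sum_split_add: "(\<Sum>k<(a::nat)+b. f k) = (\<Sum>k<a. f k) + (\<Sum>k<b. (f (a + k) :: real))"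
proof -
  have "{..<a+b} = {..<a} \<union> {a..<a+b}" by auto
  moreover have "(\<Sum>k\<in>{..<a} \<union> {a..<a+b}. f k) = (\<Sum>k<a. f k) + (\<Sum>k\<in>{a..<a+b}. f k)"
    by (rule sum.union_disjoint) auto
  moreover have "(\<Sum>k\<in>{a..<a+b}. f k) = (\<Sum>k<b. f (a + k))"
  proof -
    have "(\<Sum>k\<in>{0 + a..<b + a}. f k) = (\<Sum>k\<in>{0..<b}. f (k + a))" by (rule sum.shift_bounds_nat_ivl)
    moreover have "{0 + a..<b + a} = {a..<a+b}" by auto
    ultimately show ?thesis by (simp add: lessThan_atLeast0 add.commute)
  qed
  ultimately show ?thesis by simp
qed

context conc begin

abbreviation "A \<equiv> chiL K J N lev x"
abbreviation "X0 \<equiv> olsX K J N lev x Fp Fp'"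

definition "rowv i = unit_vec Q (lev i) @\<^sub>v vkron (unit_vec Q (lev i)) (x i)"

lemma A_carrier: "A \<in> carrier_mat N n"
proof -
  have "A \<in> carrier_mat N (2^K + J * 2^K)" unfolding chiL_def
    using mat_of_rows_carrier(1)[of "2^K + J * 2^K" "map (\<lambda>i. unit_vec (2^K) (lev i) @\<^sub>v vkron (unit_vec (2^K) (lev i)) (x i)) [0..<N]"]
    by simp
  thus ?thesis by (simp add: mult.commute)
qed

lemma A_index: "i < N \<Longrightarrow> k < n \<Longrightarrow> A $$ (i,k) = rowv i $ k"
  unfolding chiL_def rowv_def by (subst mat_of_rows_index) (auto simp: mult.commute)

lemma rowv_lo: "i < N \<Longrightarrow> k < Q \<Longrightarrow> rowv i $ k = (if k = lev i then 1 else 0)"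
  unfolding rowv_def using lev by (auto simp: vkron_def)

lemma rowv_hi: "i < N \<Longrightarrow> k < Q * J \<Longrightarrow> rowv i $ (Q + k) = (if k div J = lev i then x i $ (k mod J) else 0)"
proof -
  assume i: "i < N" and k: "k < Q * J"
  have xd: "dim_vec (x i) = J" using xdim i by auto
  have kd: "k div J < Q" using div_mod_lt(1)[OF k] .
  have u: "unit_vec Q (lev i) $ (k div J) = (if k div J = lev i then 1 else 0)" using kd by (simp add: unit_vec_def)
  have "rowv i $ (Q + k) = unit_vec Q (lev i) $ (k div J) * x i $ (k mod J)"
    unfolding rowv_def using k xd by (simp add: vkron_def)
  thus ?thesis unfolding u by simp
qed

lemma X0_index: assumes i: "i < N" and c: "c < p"
  shows "X0 $$ (i,c) = (if c < 1 + nF then zprod K (LY ! c) (lev i)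
      else zprod K (Fp' ! ((c - (1 + nF)) div J)) (lev i) * x i $ ((c - (1 + nF)) mod J))"
proof -
  define l where "l = lev i"
  define g where "g = (\<lambda>S. map (\<lambda>j. zprod K S l * x i $ j) [0..<J])"
  have lg: "\<forall>y\<in>set Fp'. length (g y) = J" unfolding g_def by simp
  define Lf where "Lf i' = [1] @ map (\<lambda>S. zprod K S (lev i')) Fp
         @ concat (map (\<lambda>S. map (\<lambda>j. zprod K S (lev i') * x i' $ j) [0..<J]) Fp')" for i'
  have X0e: "X0 = mat_of_rows (1 + nF + nG * J) (map (\<lambda>i. vec_of_list (Lf i)) [0..<N])"
    unfolding olsX_def Lf_def ..
  have "X0 $$ (i,c) = (map (\<lambda>i. vec_of_list (Lf i)) [0..<N]) ! i $ c"
    unfolding X0e by (rule mat_of_rows_index) (use i c in simp_all)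
  also have "\<dots> = vec_of_list (Lf i) $ c" using i by (simp only: nth_map length_upt nth_upt) simp
  also have "\<dots> = Lf i ! c" by (rule vec_of_list_index)
  also have "Lf i = [1] @ map (\<lambda>S. zprod K S l) Fp @ concat (map g Fp')" unfolding Lf_def g_def l_def ..
  finally have "X0 $$ (i,c) = ([1] @ map (\<lambda>S. zprod K S l) Fp @ concat (map g Fp')) ! c" .
  also have "\<dots> = (if c < 1 + nF then zprod K (LY ! c) l
      else zprod K (Fp' ! ((c - (1 + nF)) div J)) l * x i $ ((c - (1 + nF)) mod J))"
  proof (cases "c < 1 + nF")
    case True
    thus ?thesis unfolding LY_def by (cases c) (auto simp: nth_append)
  next
    case False
    hence c': "c - (1 + nF) < nG * J" using c by simp
    have ceq: "c = length [1::real] + (length (map (\<lambda>S. zprod K S l) Fp) + (c - (1 + nF)))" using False by simp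
    have "([1] @ map (\<lambda>S. zprod K S l) Fp @ concat (map g Fp')) ! (length [1::real] + (length (map (\<lambda>S. zprod K S l) Fp) + (c - (1 + nF))))
       = concat (map g Fp') ! (c - (1 + nF))" by (simp only: nth_append_length_plus)
    hence "([1] @ map (\<lambda>S. zprod K S l) Fp @ concat (map g Fp')) ! c = concat (map g Fp') ! (c - (1 + nF))"
      using ceq by metis
    also have "\<dots> = g (Fp' ! ((c - (1 + nF)) div J)) ! ((c - (1 + nF)) mod J)"
      by (rule nth_concat_uniform[OF lg c'])
    also have "\<dots> = zprod K (Fp' ! ((c - (1 + nF)) div J)) l * x i $ ((c - (1 + nF)) mod J)"
      unfolding g_def using div_mod_lt(2)[OF c'] by simp
    finally show ?thesis using False by simp
  qed
  finally show ?thesis unfolding l_def .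
qed

lemma X0_carrier: "X0 \<in> carrier_mat N p"
  unfolding olsX_def carrier_mat_def by simp

lemma AB: "A * Bm = X0"
proof (rule eq_matI)
  fix i c assume "i < dim_row X0" "c < dim_col X0"
  hence i: "i < N" and c: "c < p" using X0_carrier by auto
  have l: "lev i < Q" using lev i by auto
  have "(A * Bm) $$ (i,c) = (\<Sum>k<n. A $$ (i,k) * Bm $$ (k,c))"
    using mult_index_sum[of i A c Bm] A_carrier Bm i c by simp
  also have "\<dots> = (\<Sum>k<Q. A $$ (i,k) * Bm $$ (k,c)) + (\<Sum>k<Q * J. A $$ (i,Q + k) * Bm $$ (Q + k,c))"
    by (rule sum_split_add)
  also have "(\<Sum>k<Q. A $$ (i,k) * Bm $$ (k,c)) = (if c < 1 + nF then zprod K (LY ! c) (lev i) else 0)"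
  proof -
    have "(\<Sum>k<Q. A $$ (i,k) * Bm $$ (k,c)) = (\<Sum>k<Q. if k = lev i then (if c < 1 + nF then zprod K (LY ! c) k else 0) else 0)"
    proof (rule sum.cong)
      fix k assume "k \<in> {..<Q}"
      hence k: "k < Q" by simp
      have "Bm $$ (k,c) = (if c < 1 + nF then zprod K (LY ! c) k else 0)"
        unfolding Bm_def using k c BY BG by (simp add: BY_def LY_def)
      thus "A $$ (i,k) * Bm $$ (k,c) = (if k = lev i then (if c < 1 + nF then zprod K (LY ! c) k else 0) else 0)"
        using A_index[OF i] rowv_lo[OF i k] k by simp
    qed simp
    also have "\<dots> = (if c < 1 + nF then zprod K (LY ! c) (lev i) else 0)"
      using l by (simp add: sum.delta)
    finally show ?thesis .
  qed
  also have "(\<Sum>k<Q * J. A $$ (i,Q + k) * Bm $$ (Q + k,c)) = (if c < 1 + nF then 0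
      else zprod K (Fp' ! ((c - (1 + nF)) div J)) (lev i) * x i $ ((c - (1 + nF)) mod J))"
  proof (cases "c < 1 + nF")
    case True
    have "(\<Sum>k<Q * J. A $$ (i,Q + k) * Bm $$ (Q + k,c)) = (\<Sum>k<Q * J. 0)"
      by (rule sum.cong) (use True BY BG in \<open>auto simp: Bm_def\<close>)
    thus ?thesis using True by simp
  next
    case False
    define c' where "c' = c - (1 + nF)"
    have c': "c' < nG * J" unfolding c'_def using c False by simp
    define s0 where "s0 = c' div J"
    define j0 where "j0 = c' mod J"
    have s0: "s0 < nG" and j0: "j0 < J" unfolding s0_def j0_def using div_mod_lt[OF c'] by auto
    have "(\<Sum>k<Q * J. A $$ (i,Q + k) * Bm $$ (Q + k,c))
        = (\<Sum>k<Q * J. (\<lambda>q j. (if q = lev i then 1 else 0) * (if j = j0 then x i $ j * zprod K (Fp' ! s0) q else 0)) (k div J) (k mod J))"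
    proof (rule sum.cong)
      fix k assume "k \<in> {..<Q * J}"
      hence k: "k < Q * J" by simp
      have kd: "k div J < Q" "k mod J < J" using div_mod_lt[OF k] by auto
      have "Bm $$ (Q + k, c) = BG $$ (k, c')" unfolding Bm_def c'_def using k c False BY BG by simp
      also have "\<dots> = ZG $$ (k div J, s0) * 1\<^sub>m J $$ (k mod J, j0)"
        unfolding BG_def s0_def j0_def using mkron_index[of k ZG "1\<^sub>m J" c'] k c' ZG by simp
      also have "\<dots> = zprod K (Fp' ! s0) (k div J) * (if k mod J = j0 then 1 else 0)"
        using kd s0 j0 by (simp add: ZG_def)
      finally have "Bm $$ (Q + k, c) = zprod K (Fp' ! s0) (k div J) * (if k mod J = j0 then 1 else 0)" .
      moreover have "A $$ (i, Q + k) = (if k div J = lev i then x i $ (k mod J) else 0)"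
        using A_index[OF i, of "Q + k"] rowv_hi[OF i k] k by simp
      ultimately show "A $$ (i,Q + k) * Bm $$ (Q + k,c) = (\<lambda>q j. (if q = lev i then 1 else 0) * (if j = j0 then x i $ j * zprod K (Fp' ! s0) q else 0)) (k div J) (k mod J)"
        by simp
    qed simp
    also have "\<dots> = (\<Sum>q<Q. \<Sum>j<J. (if q = lev i then 1 else 0) * (if j = j0 then x i $ j * zprod K (Fp' ! s0) q else 0))"
      by (rule sum_div_mod)
    also have "\<dots> = (\<Sum>q<Q. (if q = lev i then 1 else 0) * (x i $ j0 * zprod K (Fp' ! s0) q))"
      by (rule sum.cong) (use j0 in \<open>simp_all add: sum_distrib_left[symmetric] sum.delta\<close>)
    also have "\<dots> = (\<Sum>q<Q. if q = lev i then x i $ j0 * zprod K (Fp' ! s0) q else 0)"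
      by (rule sum.cong) auto
    also have "\<dots> = x i $ j0 * zprod K (Fp' ! s0) (lev i)"
      using l by (simp add: sum.delta)
    finally show ?thesis using False unfolding c'_def s0_def j0_def by (simp add: mult.commute)
  qed
  also have "(if c < 1 + nF then zprod K (LY ! c) (lev i) else 0) + (if c < 1 + nF then 0
      else zprod K (Fp' ! ((c - (1 + nF)) div J)) (lev i) * x i $ ((c - (1 + nF)) mod J)) = X0 $$ (i,c)"
    using X0_index[OF i c] by simp
  finally show "(A * Bm) $$ (i,c) = X0 $$ (i,c)" .
qed (use A_carrier Bm X0_carrier in auto)

end


context conc begin

definition "Bl0 = (1 / real Q) \<cdot>\<^sub>m transpose_mat Bm"
definition "D0 = (1 / \<beta>) \<cdot>\<^sub>m (1\<^sub>m m :: real mat)"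
definition "Rr0 = (1 / \<beta>) \<cdot>\<^sub>m transpose_mat Rm"

lemma absfw_inst: "absfw A Rm Bm Bl0 D0 Rr0 Y N n m p"
proof
  show "A \<in> carrier_mat N n" by (rule A_carrier)
  show "Rm \<in> carrier_mat m n" by (rule Rm)
  show "Bm \<in> carrier_mat n p" by (rule Bm)
  show "Bl0 \<in> carrier_mat p n" unfolding Bl0_def using Bm by simp
  show "D0 \<in> carrier_mat m m" unfolding D0_def by simp
  show "Rr0 \<in> carrier_mat n m" unfolding Rr0_def using Rm by simp
  show "Y \<in> carrier_vec N" by (rule Ydim)
  show "det (transpose_mat A * A) \<noteq> 0"
    by (rule det_ne0_of_invertible[of _ n]) (use A_carrier nonsing in simp_all)
  have Q0: "real Q \<noteq> 0" by simp
  have "Bl0 * Bm = (1 / real Q) \<cdot>\<^sub>m (transpose_mat Bm * Bm)"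
    unfolding Bl0_def by (rule mult_smult_assoc_mat) (use Bm in auto)
  also have "\<dots> = 1\<^sub>m p" unfolding G1 smult_smult_mat using Q0 by (simp add: smult_one_mat1)
  finally show "Bl0 * Bm = 1\<^sub>m p" .
  show "Rm * Bm = 0\<^sub>m m p" by (rule G3)
  have b0: "\<beta> \<noteq> 0" using beta_pos by simp
  have "Rm * Rr0 = (1 / \<beta>) \<cdot>\<^sub>m (Rm * transpose_mat Rm)"
    unfolding Rr0_def by (rule mult_smult_distrib) (use Rm in auto)
  also have "\<dots> = 1\<^sub>m m" unfolding G2 smult_smult_mat using b0 by (simp add: smult_one_mat1)
  finally show "Rm * Rr0 = 1\<^sub>m m" .
  have e1: "Bm * Bl0 = (1 / real Q) \<cdot>\<^sub>m (Bm * transpose_mat Bm)"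
    unfolding Bl0_def by (rule mult_smult_distrib) (use Bm in auto)
  have e2: "transpose_mat Rm * D0 = (1 / \<beta>) \<cdot>\<^sub>m transpose_mat Rm"
    unfolding D0_def using mult_smult_distrib[of "transpose_mat Rm" n m "1\<^sub>m m" m "1 / \<beta>"] Rm by simp
  have e3: "(1 / \<beta>) \<cdot>\<^sub>m transpose_mat Rm * Rm = (1 / \<beta>) \<cdot>\<^sub>m (transpose_mat Rm * Rm)"
    by (rule mult_smult_assoc_mat) (use Rm in auto)
  show "Bm * Bl0 + transpose_mat Rm * D0 * Rm = 1\<^sub>m n"
    unfolding e1 e2 e3 by (rule G4)
qed

definition "Btop = mat Q p (\<lambda>(q,c). Bm $$ (q,c))"
definition "U = mat nF p (\<lambda>(a,c). if c = a + 1 then 2 else (0::real))"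

lemma Btop: "Btop \<in> carrier_mat Q p" unfolding Btop_def by simp
lemma U: "U \<in> carrier_mat nF p" unfolding U_def by simp
lemma CFp: "Cmat K Fp \<in> carrier_mat nF Q" unfolding Cmat_def using mat_of_rows_carrier(1)[of Q "map (cvec K) Fp"] by simp

lemma Bm_top: "q < Q \<Longrightarrow> c < p \<Longrightarrow> Bm $$ (q,c) = (if c < 1 + nF then zprod K (LY ! c) q else 0)"
  unfolding Bm_def using BY BG by (simp add: BY_def LY_def)

lemma CB: "Cmat K Fp * Btop = U"
proof (rule eq_matI)
  fix a c assume "a < dim_row U" "c < dim_col U"
  hence a: "a < nF" and c: "c < p" unfolding U_def by auto
  have Fa: "Fp ! a \<in> set Fp" using a by simp
  hence Fa': "Fp ! a \<subseteq> {..<K}" "Fp ! a \<noteq> {}" using Fp_sub unfolding PK_def PK'_def by auto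
  have "(Cmat K Fp * Btop) $$ (a,c) = (\<Sum>q<Q. Cmat K Fp $$ (a,q) * Btop $$ (q,c))"
    using mult_index_sum[of a "Cmat K Fp" c Btop] CFp Btop a c by simp
  also have "\<dots> = (\<Sum>q<Q. (1 / 2^(K-1)) * (if c < 1 + nF then zprod K (Fp ! a) q * zprod K (LY ! c) q else 0))"
    by (rule sum.cong) (use a c in \<open>auto simp: Cmat_def cvec_def mat_of_rows_index Btop_def Bm_top\<close>)
  also have "\<dots> = U $$ (a,c)"
  proof (cases "c < 1 + nF")
    case True
    have "length LY = 1 + nF" by (simp add: LY_def)
    hence "LY ! c \<in> set LY" using True by (intro nth_mem) simp
    hence LYc: "LY ! c \<subseteq> {..<K}" using sets(1) by auto
    have eq: "(Fp ! a = LY ! c) = (c = a + 1)"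
    proof (cases c)
      case 0 thus ?thesis using Fa' by (simp add: LY_def)
    next
      case (Suc c0)
      hence "c0 < nF" using True by simp
      thus ?thesis using Suc a Fp_dist by (auto simp: LY_def nth_eq_iff_index_eq)
    qed
    have "(\<Sum>q<Q. (1 / 2^(K-1)) * (if c < 1 + nF then zprod K (Fp ! a) q * zprod K (LY ! c) q else 0))
        = (1 / 2^(K-1)) * (\<Sum>q<Q. zprod K (Fp ! a) q * zprod K (LY ! c) q)"
      using True by (simp add: sum_distrib_left)
    also have "\<dots> = (1 / 2^(K-1)) * (if c = a + 1 then 2^K else 0)"
      unfolding zprod_ortho[OF Fa'(1) LYc] eq ..
    also have "\<dots> = U $$ (a,c)"
    proof -
      have "(2::real)^K = 2 * 2^(K-1)" using K_pos by (cases K) auto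
      thus ?thesis unfolding U_def using a c by simp
    qed
    finally show ?thesis .
  next
    case False
    thus ?thesis unfolding U_def using a c by simp
  qed
  finally show "(Cmat K Fp * Btop) $$ (a,c) = U $$ (a,c)" .
qed (use CFp Btop U in auto)

lemma main:
  "tau_tilde K J N lev x Y Fp Fp' = Cmat K Fp *\<^sub>v Yhat_rS K J N lev x Y Fp Fp'
   \<and> Omega_tilde K J N lev x Y Fp Fp' = Cmat K Fp * Psi_rS K J N lev x Y Fp Fp' * transpose_mat (Cmat K Fp)"
proof -
  interpret F: absfw A Rm Bm Bl0 D0 Rr0 Y N n m p by (rule absfw_inst)
  define b where "b = ols_coef X0 Y"
  have b: "b \<in> carrier_vec p" using F.beta unfolding b_def F.beta_def AB .
  have rc: "rls_coef A Rm Y = Bm *\<^sub>v b" using F.rls_coef_eq unfolding b_def F.beta_def AB .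
  have rv: "rls_cov A Rm Y = Bm * ehw_cov X0 Y * transpose_mat Bm" using F.rls_cov_eq unfolding AB .
  define Sm where "Sm = ehw_cov X0 Y"
  have Sm: "Sm \<in> carrier_mat p p"
  proof -
    have H: "minv (transpose_mat X0 * X0) \<in> carrier_mat p p" using F.H(1) unfolding AB .
    have dX: "dim_row X0 = N" using X0_carrier by simp
    have Xt: "transpose_mat X0 \<in> carrier_mat p N" using X0_carrier by simp
    have Dg: "mat_diag N (\<lambda>i. (ols_resid X0 Y $ i)^2) \<in> carrier_mat N N" by simp
    show ?thesis unfolding Sm_def ehw_cov_def sandwich_def dX
      using mult_carrier_mat[OF mult_carrier_mat[OF mult_carrier_mat[OF mult_carrier_mat[OF H Xt] Dg] X0_carrier] H] .
  qed
  have Yh: "Yhat_rS K J N lev x Y Fp Fp' = Btop *\<^sub>v b"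
  proof (rule eq_vecI)
    fix q assume "q < dim_vec (Btop *\<^sub>v b)"
    hence q: "q < Q" using Btop by simp
    have "Yhat_rS K J N lev x Y Fp Fp' $ q = (Bm *\<^sub>v b) $ q" unfolding Yhat_rS_def rc using q by simp
    also have "\<dots> = (\<Sum>c<p. Bm $$ (q,c) * b $ c)"
      using q Bm b by (simp add: scalar_prod_def lessThan_atLeast0)
    also have "\<dots> = (Btop *\<^sub>v b) $ q"
      using q Btop b by (simp add: scalar_prod_def lessThan_atLeast0 Btop_def)
    finally show "Yhat_rS K J N lev x Y Fp Fp' $ q = (Btop *\<^sub>v b) $ q" .
  qed (use Btop in \<open>simp add: Yhat_rS_def\<close>)
  have Ps: "Psi_rS K J N lev x Y Fp Fp' = Btop * Sm * transpose_mat Btop"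
  proof (rule eq_matI)
    fix a b' assume "a < dim_row (Btop * Sm * transpose_mat Btop)" "b' < dim_col (Btop * Sm * transpose_mat Btop)"
    hence a: "a < Q" and b': "b' < Q" using Btop by auto
    have BS: "Bm * Sm \<in> carrier_mat n p" "Btop * Sm \<in> carrier_mat Q p" using Bm Btop Sm by auto
    have r1: "(Bm * Sm) $$ (a,d) = (Btop * Sm) $$ (a,d)" if d: "d < p" for d
    proof -
      have "(Bm * Sm) $$ (a,d) = (\<Sum>c<p. Bm $$ (a,c) * Sm $$ (c,d))"
        using mult_index_sum[of a Bm d Sm] Bm Sm a d by simp
      also have "\<dots> = (\<Sum>c<p. Btop $$ (a,c) * Sm $$ (c,d))" by (rule sum.cong) (use a in \<open>auto simp: Btop_def\<close>)
      also have "\<dots> = (Btop * Sm) $$ (a,d)"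
        using mult_index_sum[of a Btop d Sm] Btop Sm a d by simp
      finally show ?thesis .
    qed
    have dT: "dim_row (transpose_mat Bm) = p" "dim_row (transpose_mat Btop) = p" using Bm Btop by auto
    have m1: "(Bm * Sm * transpose_mat Bm) $$ (a,b') = (\<Sum>d<dim_row (transpose_mat Bm). (Bm * Sm) $$ (a,d) * transpose_mat Bm $$ (d,b'))"
      by (rule mult_index_sum) (use BS Bm a b' in auto)
    have m2: "(Btop * Sm * transpose_mat Btop) $$ (a,b') = (\<Sum>d<dim_row (transpose_mat Btop). (Btop * Sm) $$ (a,d) * transpose_mat Btop $$ (d,b'))"
      by (rule mult_index_sum) (use BS Btop a b' in auto)
    have "Psi_rS K J N lev x Y Fp Fp' $$ (a,b') = (Bm * Sm * transpose_mat Bm) $$ (a,b')"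
      unfolding Psi_rS_def rv Sm_def using a b' by simp
    also have "\<dots> = (\<Sum>d<p. (Bm * Sm) $$ (a,d) * transpose_mat Bm $$ (d,b'))"
      unfolding m1 dT ..
    also have "\<dots> = (\<Sum>d<p. (Btop * Sm) $$ (a,d) * transpose_mat Btop $$ (d,b'))"
      by (rule sum.cong) (use r1 b' Bm Btop in \<open>auto simp: Btop_def\<close>)
    also have "\<dots> = (Btop * Sm * transpose_mat Btop) $$ (a,b')"
      unfolding m2 dT ..
    finally show "Psi_rS K J N lev x Y Fp Fp' $$ (a,b') = (Btop * Sm * transpose_mat Btop) $$ (a,b')" .
  qed (use Btop Sm in \<open>auto simp: Psi_rS_def\<close>)
  have part1: "tau_tilde K J N lev x Y Fp Fp' = Cmat K Fp *\<^sub>v Yhat_rS K J N lev x Y Fp Fp'"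
  proof -
    have "Cmat K Fp *\<^sub>v Yhat_rS K J N lev x Y Fp Fp' = U *\<^sub>v b"
      unfolding Yh CB[symmetric] using assoc_mult_mat_vec[OF CFp Btop b] by simp
    also have "\<dots> = tau_tilde K J N lev x Y Fp Fp'"
    proof (rule eq_vecI)
      fix a assume "a < dim_vec (tau_tilde K J N lev x Y Fp Fp')"
      hence a: "a < nF" unfolding tau_tilde_def by simp
      have "(U *\<^sub>v b) $ a = (\<Sum>c<p. U $$ (a,c) * b $ c)"
        using a U b by (simp add: scalar_prod_def lessThan_atLeast0)
      also have "\<dots> = (\<Sum>c<p. if c = a + 1 then 2 * b $ c else 0)"
        by (rule sum.cong) (use a in \<open>auto simp: U_def\<close>)
      also have "\<dots> = 2 * b $ (a + 1)" using a by (simp add: sum.delta)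
      finally show "(U *\<^sub>v b) $ a = tau_tilde K J N lev x Y Fp Fp' $ a"
        unfolding tau_tilde_def b_def using a by simp
    qed (use U in \<open>simp add: tau_tilde_def\<close>)
    finally show ?thesis ..
  qed
  have part2: "Omega_tilde K J N lev x Y Fp Fp' = Cmat K Fp * Psi_rS K J N lev x Y Fp Fp' * transpose_mat (Cmat K Fp)"
  proof -
    have CBt: "Cmat K Fp * Btop \<in> carrier_mat nF p" using CFp Btop by simp
    have "Cmat K Fp * (Btop * Sm * transpose_mat Btop) * transpose_mat (Cmat K Fp)
        = (Cmat K Fp * Btop) * Sm * transpose_mat (Cmat K Fp * Btop)"
    proof -
      have t: "transpose_mat (Cmat K Fp * Btop) = transpose_mat Btop * transpose_mat (Cmat K Fp)"
        by (rule transpose_mult[OF CFp Btop])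
      have BSB: "Btop * Sm \<in> carrier_mat Q p" using Btop Sm by simp
      have "Cmat K Fp * (Btop * Sm * transpose_mat Btop) = (Cmat K Fp * (Btop * Sm)) * transpose_mat Btop"
        using assoc_mult_mat[OF CFp BSB, of "transpose_mat Btop" Q] Btop by simp
      also have "Cmat K Fp * (Btop * Sm) = (Cmat K Fp * Btop) * Sm" using assoc_mult_mat[OF CFp Btop Sm] by simp
      finally have "Cmat K Fp * (Btop * Sm * transpose_mat Btop) * transpose_mat (Cmat K Fp)
          = ((Cmat K Fp * Btop) * Sm) * transpose_mat Btop * transpose_mat (Cmat K Fp)" by simp
      also have "\<dots> = ((Cmat K Fp * Btop) * Sm) * (transpose_mat Btop * transpose_mat (Cmat K Fp))"
      proof -
        have c1: "(Cmat K Fp * Btop) * Sm \<in> carrier_mat nF p" using CBt Sm by simp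
        have c2: "transpose_mat Btop \<in> carrier_mat p Q" using Btop by simp
        have c3: "transpose_mat (Cmat K Fp) \<in> carrier_mat Q nF" using CFp by simp
        show ?thesis by (rule assoc_mult_mat[OF c1 c2 c3])
      qed
      finally show ?thesis unfolding t .
    qed
    hence e: "Cmat K Fp * Psi_rS K J N lev x Y Fp Fp' * transpose_mat (Cmat K Fp) = U * Sm * transpose_mat U"
      unfolding Ps CB .
    have US: "U * Sm \<in> carrier_mat nF p" using U Sm by simp
    have r: "(U * Sm) $$ (a,d) = 2 * Sm $$ (a + 1, d)" if a: "a < nF" and d: "d < p" for a d
    proof -
      have "(U * Sm) $$ (a,d) = (\<Sum>c<p. U $$ (a,c) * Sm $$ (c,d))"
        using mult_index_sum[of a U d Sm] U Sm a d by simp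
      also have "\<dots> = (\<Sum>c<p. if c = a + 1 then 2 * Sm $$ (c,d) else 0)"
        by (rule sum.cong) (use a in \<open>auto simp: U_def\<close>)
      also have "\<dots> = 2 * Sm $$ (a + 1, d)" using a by (simp add: sum.delta)
      finally show ?thesis .
    qed
    have "Omega_tilde K J N lev x Y Fp Fp' = U * Sm * transpose_mat U"
    proof (rule eq_matI)
      fix a b' assume "a < dim_row (U * Sm * transpose_mat U)" "b' < dim_col (U * Sm * transpose_mat U)"
      hence a: "a < nF" and b': "b' < nF" using U by auto
      have dT: "dim_row (transpose_mat U) = p" using U by simp
      have m1: "(U * Sm * transpose_mat U) $$ (a,b') = (\<Sum>d<dim_row (transpose_mat U). (U * Sm) $$ (a,d) * transpose_mat U $$ (d,b'))"
        by (rule mult_index_sum) (use US U a b' in auto)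
      have "(U * Sm * transpose_mat U) $$ (a,b') = (\<Sum>d<p. (U * Sm) $$ (a,d) * transpose_mat U $$ (d,b'))"
        unfolding m1 dT ..
      also have "\<dots> = (\<Sum>d<p. if d = b' + 1 then 4 * Sm $$ (a + 1, d) else 0)"
        by (rule sum.cong) (use a b' r in \<open>auto simp: U_def\<close>)
      also have "\<dots> = 4 * Sm $$ (a + 1, b' + 1)" using b' by (simp add: sum.delta)
      finally show "Omega_tilde K J N lev x Y Fp Fp' $$ (a,b') = (U * Sm * transpose_mat U) $$ (a,b')"
        unfolding Omega_tilde_def Sm_def using a b' by simp
    qed (use U in \<open>auto simp: Omega_tilde_def\<close>)
    thus ?thesis unfolding e .
  qed
  show ?thesis using part1 part2 by simp
qed

end

theorem propositionS5:
  fixes K J N :: nat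
    and lev :: "nat \<Rightarrow> nat"            \<comment> \<open>treatment level of unit i (0-based)\<close>
    and x :: "nat \<Rightarrow> real vec"         \<comment> \<open>covariates x_i \<in> R^J\<close>
    and Y :: "real vec"                 \<comment> \<open>outcomes\<close>
    and Fp Fp' :: "nat set list"        \<comment> \<open>F_+ and F_+' (list order = row order)\<close>
  assumes lev: "\<forall>i<N. lev i < 2^K"
    and xdim: "\<forall>i<N. x i \<in> carrier_vec J"
    and xcent: "\<forall>j<J. (\<Sum>i<N. x i $ j) = 0"
    and Ydim: "Y \<in> carrier_vec N"
    and Fp_ne: "Fp \<noteq> []"
    and Fp_sub: "set Fp \<subseteq> PK K"
    and Fp_dist: "distinct Fp"
    and Fp'_sub: "set Fp' \<subseteq> PK' K"
    and Fp'_dist: "distinct Fp'"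
    and nonsing: "invertible_mat (transpose_mat (chiL K J N lev x) * chiL K J N lev x)"
  shows "tau_tilde K J N lev x Y Fp Fp' = Cmat K Fp *\<^sub>v Yhat_rS K J N lev x Y Fp Fp'
       \<and> Omega_tilde K J N lev x Y Fp Fp'
           = Cmat K Fp * Psi_rS K J N lev x Y Fp Fp' * transpose_mat (Cmat K Fp)"
proof -
  interpret conc K J N lev x Y Fp Fp'
    by (unfold_locales) (use assms in auto)
  show ?thesis by (rule main)
qed


end
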